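(* For any $V,W\in\mathcal{P}$, $\nu,p\in\mathbb{C}$ and $\alpha>0$, the integrals $$I_1=\int_{\mathcal{P}}|Y|^\nu\,\mathrm{tr}(Y^p)\,\mathrm{etr}(-VY^\alpha-WY^{-\alpha})\,\mu(dY)\quad\text{and}\quad I_2=\int_{\mathcal{P}}|Y|^\nu\,\ln|Y|\,\mathrm{etr}(-VY^\alpha-WY^{-\alpha})\,\mu(dY)$$ are convergent.
   Context: $\mathcal{P}$ is the space of positive definite $n\times n$ real symmetric matrices; $|Y|=\det Y$, $\mathrm{etr}(X)=\exp(\mathrm{tr}X)$; powers of $Y$ are defined by functional calculus; $\mu(dY)=|Y|^{-(n+1)/2}\prod_{1\le i\le j\le n}dy_{ij}$. *)

theory Defs
  imports "HOL-Analysis.Analysis" "HOL-Combinatorics.Permutations"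
begin

text \<open>n x n matrices are represented as functions nat => nat => 'a, only entries
  with indices below n being relevant.\<close>

definition mmul :: "nat \<Rightarrow> (nat \<Rightarrow> nat \<Rightarrow> 'a::semiring_0) \<Rightarrow> (nat \<Rightarrow> nat \<Rightarrow> 'a) \<Rightarrow> nat \<Rightarrow> nat \<Rightarrow> 'a" where
  "mmul n A B = (\<lambda>i j. \<Sum>k<n. A i k * B k j)"

definition mtrace :: "nat \<Rightarrow> (nat \<Rightarrow> nat \<Rightarrow> 'a::comm_monoid_add) \<Rightarrow> 'a" where
  "mtrace n A = (\<Sum>i<n. A i i)"

definition mdet :: "nat \<Rightarrow> (nat \<Rightarrow> nat \<Rightarrow> 'a::comm_ring_1) \<Rightarrow> 'a" where
  "mdet n A = (\<Sum>p | p permutes {..<n}. of_int (sign p) * (\<Prod>i<n. A i (p i)))"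

definition posdef :: "nat \<Rightarrow> (nat \<Rightarrow> nat \<Rightarrow> real) \<Rightarrow> bool" where
  "posdef n Y \<longleftrightarrow> (\<forall>i<n. \<forall>j<n. Y i j = Y j i) \<and>
     (\<forall>x::nat \<Rightarrow> real. (\<exists>i<n. x i \<noteq> 0) \<longrightarrow> 0 < (\<Sum>i<n. \<Sum>j<n. x i * Y i j * x j))"

definition spec_decomp :: "nat \<Rightarrow> (nat \<Rightarrow> nat \<Rightarrow> real) \<Rightarrow> (nat \<Rightarrow> nat \<Rightarrow> real) \<Rightarrow> (nat \<Rightarrow> real) \<Rightarrow> bool" where
  "spec_decomp n Y Q l \<longleftrightarrow>
     (\<forall>i<n. \<forall>j<n. (\<Sum>k<n. Q k i * Q k j) = (if i = j then 1 else 0)) \<and>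
     (\<forall>i<n. \<forall>j<n. Y i j = (\<Sum>k<n. Q i k * l k * Q j k))"

definition mfun :: "nat \<Rightarrow> (real \<Rightarrow> 'a::real_algebra_1) \<Rightarrow> (nat \<Rightarrow> nat \<Rightarrow> real) \<Rightarrow> nat \<Rightarrow> nat \<Rightarrow> 'a" where
  "mfun n f Y = (let (Q, l) = (SOME (Q, l). spec_decomp n Y Q l) in
      (\<lambda>i j. \<Sum>k<n. of_real (Q i k) * f (l k) * of_real (Q j k)))"

definition mpow_real :: "nat \<Rightarrow> (nat \<Rightarrow> nat \<Rightarrow> real) \<Rightarrow> real \<Rightarrow> nat \<Rightarrow> nat \<Rightarrow> real" where
  "mpow_real n Y a = mfun n (\<lambda>t. t powr a) Y"

definition mpow_cplx :: "nat \<Rightarrow> (nat \<Rightarrow> nat \<Rightarrow> real) \<Rightarrow> complex \<Rightarrow> nat \<Rightarrow> nat \<Rightarrow> complex" where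
  "mpow_cplx n Y p = mfun n (\<lambda>t. complex_of_real t powr p) Y"

text \<open>Coordinates y_ij, i <= j < n, of a symmetric matrix.\<close>
definition upper :: "nat \<Rightarrow> (nat \<times> nat) set" where
  "upper n = {(i, j). i \<le> j \<and> j < n}"

definition symm_of :: "nat \<Rightarrow> (nat \<times> nat \<Rightarrow> real) \<Rightarrow> nat \<Rightarrow> nat \<Rightarrow> real" where
  "symm_of n y = (\<lambda>i j. y (min i j, max i j))"

definition Pset :: "nat \<Rightarrow> (nat \<times> nat \<Rightarrow> real) set" where
  "Pset n = {y. posdef n (symm_of n y)}"

definition mu :: "nat \<Rightarrow> (nat \<times> nat \<Rightarrow> real) measure" where
  "mu n = density (PiM (upper n) (\<lambda>_. lborel))
     (\<lambda>y. indicator (Pset n) y * ennreal (mdet n (symm_of n y) powr (- (real n + 1) / 2)))"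

definition etr :: "nat \<Rightarrow> (nat \<Rightarrow> nat \<Rightarrow> real) \<Rightarrow> real" where
  "etr n X = exp (mtrace n X)"

end

theory Submission
  imports Defs "HOL-Complex_Analysis.Complex_Analysis" "HOL-Probability.Probability" "Jordan_Normal_Form.Determinant"
begin

definition ip :: "nat \<Rightarrow> (nat \<Rightarrow> real) \<Rightarrow> (nat \<Rightarrow> real) \<Rightarrow> real" where
  "ip n x y = (\<Sum>i<n. x i * y i)"

definition mvs :: "nat \<Rightarrow> (nat \<Rightarrow> nat \<Rightarrow> real) \<Rightarrow> (nat \<Rightarrow> real) \<Rightarrow> nat \<Rightarrow> real" where
  "mvs n Y x i = (\<Sum>j<n. Y i j * x j)"

definition bil :: "nat \<Rightarrow> (nat \<Rightarrow> nat \<Rightarrow> real) \<Rightarrow> (nat \<Rightarrow> real) \<Rightarrow> (nat \<Rightarrow> real) \<Rightarrow> real" where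
  "bil n Y x y = (\<Sum>i<n. \<Sum>j<n. x i * Y i j * y j)"

definition symm :: "nat \<Rightarrow> (nat \<Rightarrow> nat \<Rightarrow> real) \<Rightarrow> bool" where
  "symm n Y \<longleftrightarrow> (\<forall>i<n. \<forall>j<n. Y i j = Y j i)"

definition orthonormal :: "nat \<Rightarrow> nat \<Rightarrow> (nat \<Rightarrow> nat \<Rightarrow> real) \<Rightarrow> bool" where
  "orthonormal n m q \<longleftrightarrow> (\<forall>a<m. \<forall>b<m. ip n (q a) (q b) = (if a = b then 1 else 0))"

lemma ip_sym: "ip n x y = ip n y x"
  unfolding ip_def by (simp add: mult.commute)

lemma ip_nonneg: "ip n x x \<ge> 0"
  unfolding ip_def by (intro sum_nonneg) auto

lemma ip_zero: "ip n x x = 0 \<Longrightarrow> i < n \<Longrightarrow> x i = 0"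
  unfolding ip_def by (subst (asm) sum_nonneg_eq_0_iff) auto

lemma ip_cong: "(\<And>i. i < n \<Longrightarrow> x i = x' i) \<Longrightarrow> (\<And>i. i < n \<Longrightarrow> y i = y' i) \<Longrightarrow> ip n x y = ip n x' y'"
  unfolding ip_def by (intro sum.cong) auto

lemma ip_lin: "ip n (\<lambda>i. a * x i + b * y i) z = a * ip n x z + b * ip n y z"
  unfolding ip_def by (simp add: algebra_simps sum.distrib sum_distrib_left)

lemma ip_add_scale: "ip n (\<lambda>i. x i + t * y i) z = ip n x z + t * ip n y z"
  unfolding ip_def by (simp add: algebra_simps sum.distrib sum_distrib_left)

lemma ip_lin2: "ip n z (\<lambda>i. a * x i + b * y i) = a * ip n z x + b * ip n z y"
  unfolding ip_def by (simp add: algebra_simps sum.distrib sum_distrib_left)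

lemma ip_scale: "ip n (\<lambda>i. a * x i) z = a * ip n x z"
  unfolding ip_def by (simp add: algebra_simps sum_distrib_left)

lemma ip_scale2: "ip n z (\<lambda>i. a * x i) = a * ip n z x"
  unfolding ip_def by (simp add: algebra_simps sum_distrib_left)

lemma ip_sum: "ip n (\<lambda>i. \<Sum>k\<in>K. c k * x k i) z = (\<Sum>k\<in>K. c k * ip n (x k) z)"
  unfolding ip_def by (simp add: sum_distrib_left sum_distrib_right sum.swap[of _ K] mult.assoc)

lemma bil_ip: "bil n Y x y = ip n x (mvs n Y y)"
  unfolding bil_def ip_def mvs_def by (simp add: sum_distrib_left mult.assoc)

lemma bil_sym: "symm n Y \<Longrightarrow> bil n Y x y = bil n Y y x"
  unfolding bil_def symm_def
  by (subst sum.swap) (intro sum.cong refl, auto simp: mult.commute mult.left_commute)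

lemma ip_mvs_sym: "symm n Y \<Longrightarrow> ip n (mvs n Y x) y = ip n x (mvs n Y y)"
  using bil_sym[of n Y y x] by (simp add: bil_ip ip_sym)

lemma bil_expand: "bil n Y (\<lambda>i. x i + t * h i) (\<lambda>i. x i + t * h i)
   = bil n Y x x + t * bil n Y h x + t * bil n Y x h + t^2 * bil n Y h h"
  unfolding bil_def by (simp add: algebra_simps sum.distrib sum_distrib_left power2_eq_square)

lemma ip_expand: "ip n (\<lambda>i. x i + t * h i) (\<lambda>i. x i + t * h i)
   = ip n x x + 2 * t * ip n x h + t^2 * ip n h h"
  unfolding ip_def by (simp add: algebra_simps sum.distrib sum_distrib_left power2_eq_square)

lemma ip_delta: "ip n (\<lambda>j. if i = j then 1 else 0) v = v i" if "i < n"
proof -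
  have "ip n (\<lambda>j. if i = j then 1 else 0) v = (\<Sum>j<n. if i = j then v j else 0)"
    unfolding ip_def by (intro sum.cong) auto
  then show ?thesis using that by simp
qed

lemma orth_sumsq:
  assumes "orthonormal n m q"
  shows "(\<Sum>i<n. \<Sum>k<m. (q k i)^2) = real m"
proof -
  have "(\<Sum>i<n. \<Sum>k<m. (q k i)^2) = (\<Sum>k<m. ip n (q k) (q k))"
    unfolding ip_def by (subst sum.swap) (simp add: power2_eq_square)
  also have "\<dots> = (\<Sum>k<m. 1)" using assms unfolding orthonormal_def by (intro sum.cong) auto
  finally show ?thesis by simp
qed

definition resid :: "nat \<Rightarrow> nat \<Rightarrow> (nat \<Rightarrow> nat \<Rightarrow> real) \<Rightarrow> nat \<Rightarrow> nat \<Rightarrow> real" where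
  "resid n m q i = (\<lambda>j. if j < n then (if i = j then 1 else 0) - (\<Sum>k<m. q k i * q k j) else 0)"

lemma resid_orth:
  assumes on: "orthonormal n m q" and i: "i < n" and k: "k < m"
  shows "ip n (resid n m q i) (q k) = 0"
proof -
  have "ip n (resid n m q i) (q k) = ip n (\<lambda>j. 1 * (if i = j then 1 else 0) + (-1) * (\<Sum>k'<m. q k' i * q k' j)) (q k)"
    by (rule ip_cong) (auto simp: resid_def)
  also have "\<dots> = q k i - ip n (\<lambda>j. \<Sum>k'<m. q k' i * q k' j) (q k)"
    by (subst ip_lin) (simp add: ip_delta i)
  also have "ip n (\<lambda>j. \<Sum>k'<m. q k' i * q k' j) (q k) = (\<Sum>k'<m. q k' i * ip n (q k') (q k))"
    by (rule ip_sum)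
  also have "\<dots> = (\<Sum>k'<m. if k' = k then q k' i else 0)"
    using on k unfolding orthonormal_def by (intro sum.cong) auto
  also have "\<dots> = q k i" using k by simp
  finally show ?thesis by simp
qed

lemma resid_norm:
  assumes on: "orthonormal n m q" and i: "i < n"
  shows "ip n (resid n m q i) (resid n m q i) = 1 - (\<Sum>k<m. (q k i)^2)"
proof -
  have "ip n (resid n m q i) (resid n m q i) = ip n (\<lambda>j. 1 * (if i = j then 1 else 0) + (-1) * (\<Sum>k'<m. q k' i * q k' j)) (resid n m q i)"
    by (rule ip_cong) (auto simp: resid_def)
  also have "\<dots> = resid n m q i i - ip n (\<lambda>j. \<Sum>k'<m. q k' i * q k' j) (resid n m q i)"
    by (subst ip_lin) (simp add: ip_delta i)
  also have "ip n (\<lambda>j. \<Sum>k'<m. q k' i * q k' j) (resid n m q i) = (\<Sum>k'<m. q k' i * ip n (q k') (resid n m q i))"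
    by (rule ip_sum)
  also have "\<dots> = 0"
    using resid_orth[OF on i] by (intro sum.neutral) (auto simp: ip_sym)
  finally show ?thesis using i by (simp add: resid_def power2_eq_square)
qed

lemma resid_total:
  assumes on: "orthonormal n m q"
  shows "(\<Sum>i<n. ip n (resid n m q i) (resid n m q i)) = real n - real m"
proof -
  have "(\<Sum>i<n. ip n (resid n m q i) (resid n m q i)) = (\<Sum>i<n. 1 - (\<Sum>k<m. (q k i)^2))"
    using resid_norm[OF on] by (intro sum.cong) auto
  also have "\<dots> = real n - real m" using orth_sumsq[OF on] by (simp add: sum_subtractf)
  finally show ?thesis .
qed

lemma orth_complete:
  assumes on: "orthonormal n n q" and i: "i < n" and j: "j < n"
  shows "(\<Sum>k<n. q k i * q k j) = (if i = j then 1 else 0)"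
proof -
  have "(\<Sum>i<n. ip n (resid n n q i) (resid n n q i)) = 0" using resid_total[OF on] by simp
  hence "ip n (resid n n q i) (resid n n q i) = 0"
    using i by (subst (asm) sum_nonneg_eq_0_iff) (auto simp: ip_nonneg)
  from ip_zero[OF this j] show ?thesis unfolding resid_def using j by auto
qed

lemma orth_exists:
  assumes on: "orthonormal n m q" and mn: "m < n"
  shows "\<exists>x. (\<forall>i. n \<le> i \<longrightarrow> x i = 0) \<and> ip n x x = 1 \<and> (\<forall>k<m. ip n x (q k) = 0)"
proof -
  have "\<exists>i<n. ip n (resid n m q i) (resid n m q i) > 0"
  proof (rule ccontr)
    assume "\<not> ?thesis"
    hence "(\<Sum>i<n. ip n (resid n m q i) (resid n m q i)) \<le> 0" by (intro sum_nonpos) auto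
    with resid_total[OF on] mn show False by simp
  qed
  then obtain i where i: "i < n" and pos: "ip n (resid n m q i) (resid n m q i) > 0" by blast
  define c where "c = 1 / sqrt (ip n (resid n m q i) (resid n m q i))"
  define x where "x = (\<lambda>j. c * resid n m q i j)"
  have "ip n x x = c * c * ip n (resid n m q i) (resid n m q i)"
    unfolding x_def by (simp add: ip_scale ip_scale2)
  also have "\<dots> = 1" using pos unfolding c_def
    by (simp add: field_simps)
  finally have "ip n x x = 1" .
  moreover have "\<forall>k<m. ip n x (q k) = 0" unfolding x_def using resid_orth[OF on i] by (simp add: ip_scale)
  moreover have "\<forall>j. n \<le> j \<longrightarrow> x j = 0" unfolding x_def resid_def by auto
  ultimately show ?thesis by blast
qed

lemma cont_coord: "continuous_on UNIV (\<lambda>x::nat \<Rightarrow> real. x i)"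
  by (rule continuous_on_product_coordinates)

lemma cont_ip: "continuous_on UNIV (\<lambda>x. ip n x (y x))" if "continuous_on UNIV y" for y :: "(nat \<Rightarrow> real) \<Rightarrow> nat \<Rightarrow> real"
  unfolding ip_def
  using that by (intro continuous_intros cont_coord) (auto intro: continuous_on_compose2[OF cont_coord])

lemma cont_bil: "continuous_on UNIV (\<lambda>x. bil n Y x x)"
  unfolding bil_def by (intro continuous_intros cont_coord)

lemma box_compact: "compact (PiE UNIV (\<lambda>_::nat. {-1..1::real}))"
proof -
  have "compactin (product_topology (\<lambda>_. euclidean) UNIV) (PiE UNIV (\<lambda>_::nat. {-1..1::real}))"
    by (subst compactin_PiE) auto
  then show ?thesis by (simp add: euclidean_product_topology)
qed

lemma max_exists:
  fixes F :: "(nat \<Rightarrow> real) \<Rightarrow> real"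
  assumes "continuous_on UNIV F" "closed K" "\<And>x i. x \<in> K \<Longrightarrow> \<bar>x i\<bar> \<le> 1" "K \<noteq> {}"
  shows "\<exists>x\<in>K. \<forall>y\<in>K. F y \<le> F x"
proof -
  have "K = PiE UNIV (\<lambda>_. {-1..1}) \<inter> K" using assms(3) by (auto simp: abs_le_iff)
  hence "compact K" using box_compact assms(2) by (metis compact_Int_closed)
  then show ?thesis using assms by (intro continuous_attains_sup) (auto intro: continuous_on_subset)
qed

lemma eig_step:
  assumes sym: "symm n Y" and on: "orthonormal n m q"
    and eig: "\<And>k i. k < m \<Longrightarrow> i < n \<Longrightarrow> mvs n Y (q k) i = lam k * q k i" and mn: "m < n"
  shows "\<exists>x \<mu>. ip n x x = 1 \<and> (\<forall>k<m. ip n x (q k) = 0) \<and> (\<forall>i<n. mvs n Y x i = \<mu> * x i)"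
proof -
  define K where "K = (\<Inter>i\<in>{n..}. {x::nat\<Rightarrow>real. x i = 0}) \<inter> {x. ip n x x = 1} \<inter> (\<Inter>k\<in>{..<m}. {x. ip n x (q k) = 0})"
  have Kclosed: "closed K" unfolding K_def
    by (intro closed_Int closed_INT ballI closed_Collect_eq cont_coord cont_ip continuous_on_const continuous_on_id)
  have Kne: "K \<noteq> {}" using orth_exists[OF on mn] unfolding K_def by auto
  have Kb: "\<bar>x i\<bar> \<le> 1" if "x \<in> K" for x i
  proof (cases "i < n")
    case True
    have "(x i)^2 \<le> (\<Sum>j<n. x j * x j)"
      using True by (subst sum.remove[of _ i]) (auto simp: power2_eq_square intro!: sum_nonneg)
    also have "\<dots> = 1" using that unfolding K_def ip_def by auto
    finally show ?thesis by (simp add: abs_square_le_1)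
  next
    case False then show ?thesis using that unfolding K_def by auto
  qed
  obtain x where xK: "x \<in> K" and xmax: "\<And>y. y \<in> K \<Longrightarrow> bil n Y y y \<le> bil n Y x x"
  proof -
    have "\<exists>x\<in>K. \<forall>y\<in>K. bil n Y y y \<le> bil n Y x x"
      by (rule max_exists[OF cont_bil Kclosed]) (use Kb Kne in auto)
    then show ?thesis using that by blast
  qed
  define lm where "lm = bil n Y x x"
  have x1: "ip n x x = 1" and xo: "\<And>k. k < m \<Longrightarrow> ip n x (q k) = 0" and xz: "\<And>i. n \<le> i \<Longrightarrow> x i = 0"
    using xK unfolding K_def by auto
  have claim: "bil n Y z z \<le> lm * ip n z z" if zz: "\<And>i. n \<le> i \<Longrightarrow> z i = 0" and zo: "\<And>k. k < m \<Longrightarrow> ip n z (q k) = 0" for z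
  proof (cases "ip n z z = 0")
    case True
    have "bil n Y z z = 0" unfolding bil_def using ip_zero[OF True] by simp
    then show ?thesis using True by simp
  next
    case False
    hence pos: "ip n z z > 0" using ip_nonneg[of n z] by simp
    define c where "c = 1 / sqrt (ip n z z)"
    define z' where "z' = (\<lambda>i. c * z i)"
    have cc: "c * c * ip n z z = 1" using pos unfolding c_def by (simp add: field_simps)
    have "z' \<in> K" unfolding K_def z'_def using zz zo cc by (auto simp: ip_scale ip_scale2)
    hence "bil n Y z' z' \<le> lm" using xmax lm_def by auto
    moreover have "bil n Y z' z' = c * c * bil n Y z z"
      unfolding z'_def bil_def by (simp add: sum_distrib_left algebra_simps)
    ultimately have "c * c * bil n Y z z \<le> lm * (c * c * ip n z z)" using cc by simp
    moreover have "c * c > 0" using pos unfolding c_def by simp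
    ultimately show ?thesis by (metis mult.left_commute mult_le_cancel_left_pos)
  qed
  define h where "h = (\<lambda>i. if i < n then mvs n Y x i - lm * x i else 0)"
  have hz: "\<And>i. n \<le> i \<Longrightarrow> h i = 0" unfolding h_def by auto
  have ho: "ip n h (q k) = 0" if k: "k < m" for k
  proof -
    have "ip n h (q k) = ip n (\<lambda>i. 1 * mvs n Y x i + (- lm) * x i) (q k)"
      by (rule ip_cong) (auto simp: h_def)
    also have "\<dots> = ip n (mvs n Y x) (q k) - lm * ip n x (q k)" by (simp only: ip_lin)
    also have "ip n (mvs n Y x) (q k) = ip n x (mvs n Y (q k))" by (rule ip_mvs_sym[OF sym])
    also have "\<dots> = ip n x (\<lambda>i. lam k * q k i)" by (rule ip_cong) (auto simp: eig k)
    finally show ?thesis using xo[OF k] by (simp add: ip_scale2)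
  qed
  have bxx: "bil n Y x x = ip n x (mvs n Y x)" by (rule bil_ip)
  have ixh: "ip n x h = 0"
  proof -
    have "ip n x h = ip n x (\<lambda>i. 1 * mvs n Y x i + (- lm) * x i)"
      by (rule ip_cong) (auto simp: h_def)
    also have "\<dots> = lm - lm * ip n x x" by (simp only: ip_lin2) (simp add: bxx[symmetric] lm_def)
    finally show ?thesis using x1 by simp
  qed
  have bhx: "bil n Y h x = ip n h h"
  proof -
    have "bil n Y h x = ip n h (mvs n Y x)" by (rule bil_ip)
    also have "\<dots> = ip n h (\<lambda>i. 1 * h i + lm * x i)" by (rule ip_cong) (auto simp: h_def)
    also have "\<dots> = ip n h h" using ixh by (simp only: ip_lin2) (simp add: ip_sym)
    finally show ?thesis .
  qed
  define H where "H = ip n h h"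
  define C where "C = lm * H - bil n Y h h"
  have ineq: "2 * t * H \<le> t^2 * C" for t
  proof -
    have "bil n Y (\<lambda>i. x i + t * h i) (\<lambda>i. x i + t * h i) \<le> lm * ip n (\<lambda>i. x i + t * h i) (\<lambda>i. x i + t * h i)"
      by (rule claim) (auto simp: xz hz ip_add_scale xo ho)
    then show ?thesis
      unfolding bil_expand ip_expand using bil_sym[OF sym, of x h] bhx ixh x1
      by (simp add: H_def C_def lm_def algebra_simps)
  qed
  have H0: "H = 0"
  proof (rule ccontr)
    assume "H \<noteq> 0"
    hence Hp: "H > 0" using ip_nonneg[of n h] H_def by simp
    define t where "t = H / (\<bar>C\<bar> + 1)"
    have tp: "t > 0" using Hp unfolding t_def by (simp add: add_pos_nonneg)
    have "t * C \<le> t * \<bar>C\<bar>" using tp by (simp add: mult_left_mono)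
    also have "t * \<bar>C\<bar> < H" unfolding t_def using Hp
      by (simp add: field_simps)
    finally have "t * C < H" .
    moreover have "2 * t * H \<le> t * (t * C)" using ineq[of t] by (simp add: power2_eq_square)
    hence "2 * H \<le> t * C" using tp by (simp add: mult.assoc mult_le_cancel_left_pos)
    ultimately show False using Hp by simp
  qed
  have "\<forall>i<n. mvs n Y x i = lm * x i"
  proof (intro allI impI)
    fix i assume "i < n"
    from ip_zero[OF H0[unfolded H_def] this] show "mvs n Y x i = lm * x i" unfolding h_def using \<open>i < n\<close> by simp
  qed
  then show ?thesis using x1 xo by (intro exI[of _ x] exI[of _ lm]) simp
qed


lemma eig_family:
  assumes sym: "symm n Y" and "m \<le> n"
  shows "\<exists>q lam. orthonormal n m q \<and> (\<forall>k<m. \<forall>i<n. mvs n Y (q k) i = lam k * q k i)"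
  using \<open>m \<le> n\<close>
proof (induction m)
  case 0
  then show ?case by (auto simp: orthonormal_def)
next
  case (Suc m)
  then obtain q lam where on: "orthonormal n m q" and eig: "\<forall>k<m. \<forall>i<n. mvs n Y (q k) i = lam k * q k i"
    by auto
  have mn: "m < n" using Suc.prems by simp
  have e2: "\<And>k i. k < m \<Longrightarrow> i < n \<Longrightarrow> mvs n Y (q k) i = lam k * q k i" using eig by blast
  from eig_step[OF sym on e2 mn]
  obtain x \<mu> where x1: "ip n x x = 1" and xo: "\<forall>k<m. ip n x (q k) = 0" and xe: "\<forall>i<n. mvs n Y x i = \<mu> * x i"
    by blast
  define q' where "q' = q(m := x)"
  define lam' where "lam' = lam(m := \<mu>)"
  have "orthonormal n (Suc m) q'"
    unfolding orthonormal_def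
  proof (intro allI impI)
    fix a b assume a: "a < Suc m" and b: "b < Suc m"
    show "ip n (q' a) (q' b) = (if a = b then 1 else 0)"
    proof (cases "a = m"; cases "b = m")
      assume "a = m" "b = m" then show ?thesis using x1 by (simp add: q'_def)
    next
      assume "a = m" "b \<noteq> m" then show ?thesis using xo b by (simp add: q'_def)
    next
      assume "a \<noteq> m" "b = m" then show ?thesis using xo a by (simp add: q'_def ip_sym)
    next
      assume "a \<noteq> m" "b \<noteq> m" then show ?thesis using on a b by (simp add: q'_def orthonormal_def)
    qed
  qed
  moreover have "\<forall>k<Suc m. \<forall>i<n. mvs n Y (q' k) i = lam' k * q' k i"
    using eig xe unfolding q'_def lam'_def by (auto simp: less_Suc_eq)
  ultimately show ?case by blast
qed

lemma symm_symm_of: "symm n (symm_of n y)"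
  unfolding symm_def symm_of_def by (auto simp: min.commute max.commute)

lemma spec_exists:
  assumes sym: "symm n Y"
  shows "\<exists>Q l. spec_decomp n Y Q l"
proof -
  obtain q lam where on: "orthonormal n n q" and eig: "\<forall>k<n. \<forall>i<n. mvs n Y (q k) i = lam k * q k i"
    using eig_family[OF sym order.refl] by blast
  define Q where "Q = (\<lambda>i k. q k i)"
  have 1: "\<forall>i<n. \<forall>j<n. (\<Sum>k<n. Q k i * Q k j) = (if i = j then 1 else 0)"
    using on unfolding orthonormal_def ip_def Q_def by auto
  have 2: "Y i j = (\<Sum>k<n. Q i k * lam k * Q j k)" if i: "i < n" and j: "j < n" for i j
  proof -
    have "(\<Sum>l<n. Y i l * (if l = j then 1 else 0)) = (\<Sum>l<n. if l = j then Y i l else 0)"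
      by (intro sum.cong) auto
    hence "Y i j = (\<Sum>l<n. Y i l * (if l = j then 1 else 0))" using j by simp
    also have "\<dots> = (\<Sum>l<n. Y i l * (\<Sum>k<n. q k l * q k j))"
      using orth_complete[OF on] j by (intro sum.cong) auto
    also have "\<dots> = (\<Sum>k<n. (\<Sum>l<n. Y i l * q k l) * q k j)"
    proof -
      have "(\<Sum>l<n. Y i l * (\<Sum>k<n. q k l * q k j)) = (\<Sum>l<n. \<Sum>k<n. Y i l * q k l * q k j)"
        by (simp add: sum_distrib_left mult.assoc)
      also have "\<dots> = (\<Sum>k<n. \<Sum>l<n. Y i l * q k l * q k j)" by (rule sum.swap)
      also have "\<dots> = (\<Sum>k<n. (\<Sum>l<n. Y i l * q k l) * q k j)" by (simp add: sum_distrib_right)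
      finally show ?thesis .
    qed
    also have "\<dots> = (\<Sum>k<n. lam k * q k i * q k j)"
      using eig i by (intro sum.cong) (auto simp: mvs_def)
    finally show ?thesis unfolding Q_def by (simp add: mult_ac)
  qed
  show ?thesis unfolding spec_decomp_def using 1 2 by blast
qed

lemma spec_rows:
  assumes "spec_decomp n Y Q l" "i < n" "j < n"
  shows "(\<Sum>k<n. Q i k * Q j k) = (if i = j then 1 else 0)"
proof -
  have on: "orthonormal n n (\<lambda>k i. Q i k)"
    using assms(1) unfolding spec_decomp_def orthonormal_def ip_def by auto
  show ?thesis using orth_complete[OF on assms(2,3)] .
qed


abbreviation MM :: "nat \<Rightarrow> (nat \<times> nat \<Rightarrow> real) measure" where
  "MM n \<equiv> PiM (upper n) (\<lambda>_. lborel)"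

lemma symm_of_meas[measurable]:
  assumes "i < n" "j < n"
  shows "(\<lambda>y. symm_of n y i j) \<in> borel_measurable (MM n)"
proof -
  have "(min i j, max i j) \<in> upper n" using assms unfolding upper_def by auto
  then show ?thesis unfolding symm_of_def
    using measurable_component_singleton[of "(min i j, max i j)" "upper n" "\<lambda>_. lborel"] by simp
qed

definition good :: "nat \<Rightarrow> (real \<Rightarrow> real) \<Rightarrow> bool" where
  "good n f \<longleftrightarrow> (\<exists>G. (\<forall>i<n. \<forall>j<n. (\<lambda>y. G y i j) \<in> borel_measurable (MM n)) \<and>
     (\<forall>y Q l. spec_decomp n (symm_of n y) Q l \<longrightarrow> (\<forall>i<n. \<forall>j<n. G y i j = (\<Sum>k<n. Q i k * f (l k) * Q j k))))"

lemma good_const: "good n (\<lambda>t. c)"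
  unfolding good_def
proof (intro exI[of _ "\<lambda>y i j. if i = j then c else 0"] conjI allI impI)
  fix y Q l i j assume sd: "spec_decomp n (symm_of n y) Q l" and i: "i < n" and j: "j < n"
  have "(\<Sum>k<n. Q i k * c * Q j k) = c * (\<Sum>k<n. Q i k * Q j k)"
    by (simp add: sum_distrib_left mult_ac)
  then show "(if i = j then c else 0) = (\<Sum>k<n. Q i k * c * Q j k)"
    using spec_rows[OF sd i j] by simp
qed auto

lemma good_id: "good n (\<lambda>t. t)"
  unfolding good_def
  by (intro exI[of _ "\<lambda>y i j. symm_of n y i j"] conjI allI impI) (auto simp: spec_decomp_def)

lemma good_add: "good n f \<Longrightarrow> good n g \<Longrightarrow> good n (\<lambda>t. f t + g t)"
  unfolding good_def
proof (elim exE conjE)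
  fix F G
  assume F1: "\<forall>i<n. \<forall>j<n. (\<lambda>y. F y i j) \<in> borel_measurable (MM n)"
    and F2: "\<forall>y Q l. spec_decomp n (symm_of n y) Q l \<longrightarrow> (\<forall>i<n. \<forall>j<n. F y i j = (\<Sum>k<n. Q i k * f (l k) * Q j k))"
    and G1: "\<forall>i<n. \<forall>j<n. (\<lambda>y. G y i j) \<in> borel_measurable (MM n)"
    and G2: "\<forall>y Q l. spec_decomp n (symm_of n y) Q l \<longrightarrow> (\<forall>i<n. \<forall>j<n. G y i j = (\<Sum>k<n. Q i k * g (l k) * Q j k))"
  show "\<exists>H. (\<forall>i<n. \<forall>j<n. (\<lambda>y. H y i j) \<in> borel_measurable (MM n)) \<and>
     (\<forall>y Q l. spec_decomp n (symm_of n y) Q l \<longrightarrow> (\<forall>i<n. \<forall>j<n. H y i j = (\<Sum>k<n. Q i k * (f (l k) + g (l k)) * Q j k)))"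
    using F1 F2 G1 G2
    by (intro exI[of _ "\<lambda>y i j. F y i j + G y i j"])
       (auto simp: algebra_simps sum.distrib intro!: borel_measurable_add)
qed

lemma orth_prod:
  fixes Q :: "nat \<Rightarrow> nat \<Rightarrow> real"
  assumes orth: "\<And>a b. a < n \<Longrightarrow> b < n \<Longrightarrow> (\<Sum>m<n. Q m a * Q m b) = (if a = b then 1 else 0)"
  shows "(\<Sum>m<n. (\<Sum>k<n. A k * Q m k) * (\<Sum>k<n. Q m k * B k)) = (\<Sum>k<n. A k * B k)"
proof -
  have "(\<Sum>m<n. (\<Sum>k<n. A k * Q m k) * (\<Sum>k<n. Q m k * B k))
      = (\<Sum>m<n. \<Sum>a<n. \<Sum>b<n. A a * B b * (Q m a * Q m b))"
  proof (intro sum.cong refl)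
    fix m
    have "(\<Sum>k<n. A k * Q m k) * (\<Sum>k<n. Q m k * B k) = (\<Sum>a<n. \<Sum>b<n. (A a * Q m a) * (Q m b * B b))"
      by (simp only: sum_product)
    also have "\<dots> = (\<Sum>a<n. \<Sum>b<n. A a * B b * (Q m a * Q m b))"
      by (intro sum.cong refl) (simp add: mult_ac)
    finally show "(\<Sum>k<n. A k * Q m k) * (\<Sum>k<n. Q m k * B k) = (\<Sum>a<n. \<Sum>b<n. A a * B b * (Q m a * Q m b))" .
  qed
  also have "\<dots> = (\<Sum>a<n. \<Sum>m<n. \<Sum>b<n. A a * B b * (Q m a * Q m b))"
    by (rule sum.swap)
  also have "\<dots> = (\<Sum>a<n. \<Sum>b<n. \<Sum>m<n. A a * B b * (Q m a * Q m b))"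
    by (rule sum.cong[OF refl], rule sum.swap)
  also have "\<dots> = (\<Sum>a<n. \<Sum>b<n. A a * B b * (\<Sum>m<n. Q m a * Q m b))"
    by (simp add: sum_distrib_left)
  also have "\<dots> = (\<Sum>a<n. \<Sum>b<n. if a = b then A a * B b else 0)"
    using orth by (intro sum.cong refl) auto
  also have "\<dots> = (\<Sum>k<n. A k * B k)" by simp
  finally show ?thesis .
qed

lemma good_mult: "good n f \<Longrightarrow> good n g \<Longrightarrow> good n (\<lambda>t. f t * g t)"
  unfolding good_def
proof (elim exE conjE)
  fix F G
  assume F1: "\<forall>i<n. \<forall>j<n. (\<lambda>y. F y i j) \<in> borel_measurable (MM n)"
    and F2: "\<forall>y Q l. spec_decomp n (symm_of n y) Q l \<longrightarrow> (\<forall>i<n. \<forall>j<n. F y i j = (\<Sum>k<n. Q i k * f (l k) * Q j k))"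
    and G1: "\<forall>i<n. \<forall>j<n. (\<lambda>y. G y i j) \<in> borel_measurable (MM n)"
    and G2: "\<forall>y Q l. spec_decomp n (symm_of n y) Q l \<longrightarrow> (\<forall>i<n. \<forall>j<n. G y i j = (\<Sum>k<n. Q i k * g (l k) * Q j k))"
  show "\<exists>H. (\<forall>i<n. \<forall>j<n. (\<lambda>y. H y i j) \<in> borel_measurable (MM n)) \<and>
     (\<forall>y Q l. spec_decomp n (symm_of n y) Q l \<longrightarrow> (\<forall>i<n. \<forall>j<n. H y i j = (\<Sum>k<n. Q i k * (f (l k) * g (l k)) * Q j k)))"
  proof (intro exI[of _ "\<lambda>y i j. \<Sum>m<n. F y i m * G y m j"] conjI allI impI)
    fix i j assume "i < n" "j < n"
    then show "(\<lambda>y. \<Sum>m<n. F y i m * G y m j) \<in> borel_measurable (MM n)"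
      using F1 G1 by (intro borel_measurable_sum borel_measurable_times) auto
  next
    fix y Q l i j assume sd: "spec_decomp n (symm_of n y) Q l" and i: "i < n" and j: "j < n"
    have orth: "\<And>a b. a < n \<Longrightarrow> b < n \<Longrightarrow> (\<Sum>m<n. Q m a * Q m b) = (if a = b then 1 else 0)"
      using sd unfolding spec_decomp_def by auto
    have "(\<Sum>m<n. F y i m * G y m j) = (\<Sum>m<n. (\<Sum>k<n. (Q i k * f (l k)) * Q m k) * (\<Sum>k<n. Q m k * (g (l k) * Q j k)))"
      using F2 G2 sd i j by (intro sum.cong refl) (auto simp: mult_ac)
    also have "\<dots> = (\<Sum>k<n. (Q i k * f (l k)) * (g (l k) * Q j k))" by (rule orth_prod[OF orth])
    finally show "(\<Sum>m<n. F y i m * G y m j) = (\<Sum>k<n. Q i k * (f (l k) * g (l k)) * Q j k)"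
      by (simp add: mult_ac)
  qed
qed

lemma good_lim:
  assumes g: "\<And>m. good n (F m)" and lim: "\<And>t. (\<lambda>m. F m t) \<longlonglongrightarrow> f t"
  shows "good n f"
proof -
  from g have "\<forall>m. \<exists>G. (\<forall>i<n. \<forall>j<n. (\<lambda>y. G y i j) \<in> borel_measurable (MM n)) \<and>
     (\<forall>y Q l. spec_decomp n (symm_of n y) Q l \<longrightarrow> (\<forall>i<n. \<forall>j<n. G y i j = (\<Sum>k<n. Q i k * F m (l k) * Q j k)))"
    unfolding good_def by blast
  from choice[OF this] obtain G where GG: "\<forall>m. (\<forall>i<n. \<forall>j<n. (\<lambda>y. G m y i j) \<in> borel_measurable (MM n)) \<and>
     (\<forall>y Q l. spec_decomp n (symm_of n y) Q l \<longrightarrow> (\<forall>i<n. \<forall>j<n. G m y i j = (\<Sum>k<n. Q i k * F m (l k) * Q j k)))"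
    by blast
  have G1: "\<And>m i j. i < n \<Longrightarrow> j < n \<Longrightarrow> (\<lambda>y. G m y i j) \<in> borel_measurable (MM n)"
    using GG by blast
  have G2: "\<And>m y Q l i j. spec_decomp n (symm_of n y) Q l \<Longrightarrow> i < n \<Longrightarrow> j < n \<Longrightarrow> G m y i j = (\<Sum>k<n. Q i k * F m (l k) * Q j k)"
    using GG by blast
  define H where "H = (\<lambda>y i j. lim (\<lambda>m. G m y i j))"
  have conv: "(\<lambda>m. G m y i j) \<longlonglongrightarrow> (\<Sum>k<n. Q i k * f (l k) * Q j k)"
    if sd: "spec_decomp n (symm_of n y) Q l" and i: "i < n" and j: "j < n" for y Q l i j
  proof -
    have "(\<lambda>m. \<Sum>k<n. Q i k * F m (l k) * Q j k) \<longlonglongrightarrow> (\<Sum>k<n. Q i k * f (l k) * Q j k)"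
      by (intro tendsto_sum tendsto_mult tendsto_const lim)
    then show ?thesis using G2[OF sd i j] by simp
  qed
  have Hval: "H y i j = (\<Sum>k<n. Q i k * f (l k) * Q j k)"
    if sd: "spec_decomp n (symm_of n y) Q l" and i: "i < n" and j: "j < n" for y Q l i j
    unfolding H_def using conv[OF sd i j] by (rule limI)
  show ?thesis unfolding good_def
  proof (intro exI[of _ H] conjI allI impI)
    fix i j assume i: "i < n" and j: "j < n"
    show "(\<lambda>y. H y i j) \<in> borel_measurable (MM n)"
    proof (rule borel_measurable_LIMSEQ_real[where u="\<lambda>m y. G m y i j"])
      fix y
      obtain Q l where sd: "spec_decomp n (symm_of n y) Q l" using spec_exists[OF symm_symm_of] by blast
      show "(\<lambda>m. G m y i j) \<longlonglongrightarrow> H y i j" using conv[OF sd i j] Hval[OF sd i j] by simp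
    qed (use G1 i j in auto)
  qed (use Hval in auto)
qed

lemma good_poly: "real_polynomial_function p \<Longrightarrow> good n p"
proof (induction rule: real_polynomial_function.induct)
  case (linear f)
  then obtain c where "f = (\<lambda>x. x * c)" using real_bounded_linear by blast
  then show ?case using good_mult[OF good_id good_const] by simp
next
  case (const c) then show ?case by (rule good_const)
next
  case (add f g) then show ?case using good_add by blast
next
  case (mult f g) then show ?case using good_mult by blast
qed

lemma good_cont:
  assumes cont: "continuous_on UNIV h"
  shows "good n h"
proof -
  have "\<forall>m::nat. \<exists>p. real_polynomial_function p \<and> (\<forall>x\<in>{- real m..real m}. \<bar>h x - p x\<bar> < inverse (real (Suc m)))"
  proof
    fix m :: nat
    obtain p where "real_polynomial_function p" "\<And>x. x \<in> {- real m..real m} \<Longrightarrow> \<bar>h x - p x\<bar> < inverse (real (Suc m))"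
      using Stone_Weierstrass_real_polynomial_function[of "{- real m..real m}" h "inverse (real (Suc m))"]
        continuous_on_subset[OF cont] by auto
    then show "\<exists>p. real_polynomial_function p \<and> (\<forall>x\<in>{- real m..real m}. \<bar>h x - p x\<bar> < inverse (real (Suc m)))"
      by blast
  qed
  from choice[OF this] obtain p where pp: "\<forall>m. real_polynomial_function (p m) \<and> (\<forall>x\<in>{- real m..real m}. \<bar>h x - p m x\<bar> < inverse (real (Suc m)))"
    by blast
  have p1: "\<And>m. real_polynomial_function (p m)" using pp by blast
  have p2: "\<And>m x. x \<in> {- real m..real m} \<Longrightarrow> \<bar>h x - p m x\<bar> < inverse (real (Suc m))"
    using pp by blast
  show ?thesis
  proof (rule good_lim[OF good_poly[OF p1]])
    fix t
    obtain N :: nat where N: "\<bar>t\<bar> \<le> real N" using real_arch_simple by blast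
    have "((\<lambda>m. p m t - h t) \<longlongrightarrow> 0) sequentially"
    proof (rule Lim_null_comparison[OF _ LIMSEQ_inverse_real_of_nat])
      show "\<forall>\<^sub>F m in sequentially. norm (p m t - h t) \<le> inverse (real (Suc m))"
      proof (rule eventually_sequentiallyI[of N])
        fix m assume "N \<le> m"
        hence "t \<in> {- real m..real m}" using N by auto
        from p2[OF this] show "norm (p m t - h t) \<le> inverse (real (Suc m))" by simp
      qed
    qed
    then show "(\<lambda>m. p m t) \<longlonglongrightarrow> h t" by (rule LIM_zero_cancel)
  qed
qed


lemma good_pos:
  assumes F: "continuous_on {0<..} F"
  shows "good n (\<lambda>t. if 0 < t then F t else 0)"
proof (rule good_lim)
  fix m :: nat
  show "good n (\<lambda>t. min 1 (max 0 (real (Suc m) * t)) * F (max t (inverse (real (Suc m)))))"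
  proof (rule good_cont)
    have "continuous_on UNIV (\<lambda>t. F (max t (inverse (real (Suc m)))))"
      by (rule continuous_on_compose2[OF F]) (auto intro!: continuous_intros simp: less_max_iff_disj)
    then show "continuous_on UNIV (\<lambda>t. min 1 (max 0 (real (Suc m) * t)) * F (max t (inverse (real (Suc m)))))"
      by (intro continuous_intros)
  qed
next
  fix t :: real
  show "(\<lambda>m. min 1 (max 0 (real (Suc m) * t)) * F (max t (inverse (real (Suc m))))) \<longlonglongrightarrow> (if 0 < t then F t else 0)"
  proof (cases "0 < t")
    case True
    obtain N where N: "inverse (real (Suc N)) < t" using reals_Archimedean[OF True] by blast
    have "\<forall>\<^sub>F m in sequentially. min 1 (max 0 (real (Suc m) * t)) * F (max t (inverse (real (Suc m)))) = F t"
    proof (rule eventually_sequentiallyI[of N])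
      fix m assume "N \<le> m"
      hence "inverse (real (Suc m)) \<le> inverse (real (Suc N))" by (simp add: field_simps)
      hence lt: "inverse (real (Suc m)) < t" using N by linarith
      hence "1 < real (Suc m) * t" by (simp add: field_simps)
      with lt show "min 1 (max 0 (real (Suc m) * t)) * F (max t (inverse (real (Suc m)))) = F t"
        by simp
    qed
    then show ?thesis using True by (simp add: tendsto_eventually)
  next
    case False
    hence "real (Suc m) * t \<le> 0" for m by (simp add: mult_nonneg_nonpos)
    then show ?thesis using False by simp
  qed
qed

lemma good_neg:
  assumes F: "continuous_on {..<0} F"
  shows "good n (\<lambda>t. if t < 0 then F t else 0)"
proof (rule good_lim)
  fix m :: nat
  show "good n (\<lambda>t. min 1 (max 0 (- (real (Suc m) * t))) * F (min t (- inverse (real (Suc m)))))"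
  proof (rule good_cont)
    have "continuous_on UNIV (\<lambda>t. F (min t (- inverse (real (Suc m)))))"
      by (rule continuous_on_compose2[OF F]) (auto intro!: continuous_intros simp: min_less_iff_disj)
    then show "continuous_on UNIV (\<lambda>t. min 1 (max 0 (- (real (Suc m) * t))) * F (min t (- inverse (real (Suc m)))))"
      by (intro continuous_intros)
  qed
next
  fix t :: real
  show "(\<lambda>m. min 1 (max 0 (- (real (Suc m) * t))) * F (min t (- inverse (real (Suc m))))) \<longlonglongrightarrow> (if t < 0 then F t else 0)"
  proof (cases "t < 0")
    case True
    obtain N where N: "inverse (real (Suc N)) < - t" using reals_Archimedean[of "-t"] True by auto
    have "\<forall>\<^sub>F m in sequentially. min 1 (max 0 (- (real (Suc m) * t))) * F (min t (- inverse (real (Suc m)))) = F t"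
    proof (rule eventually_sequentiallyI[of N])
      fix m assume "N \<le> m"
      hence "inverse (real (Suc m)) \<le> inverse (real (Suc N))" by (simp add: field_simps)
      hence lt: "inverse (real (Suc m)) < - t" using N by linarith
      hence "1 < - (real (Suc m) * t)" by (simp add: field_simps)
      with lt show "min 1 (max 0 (- (real (Suc m) * t))) * F (min t (- inverse (real (Suc m)))) = F t"
        by simp
    qed
    then show ?thesis using True by (simp add: tendsto_eventually)
  next
    case False
    hence "- (real (Suc m) * t) \<le> 0" for m by simp
    then show ?thesis using False by simp
  qed
qed

lemma good_pw:
  assumes "continuous_on {0<..} F" "continuous_on {..<0} F" "F 0 = 0"
  shows "good n F"
proof -
  have "F = (\<lambda>t. (if 0 < t then F t else 0) + (if t < 0 then F t else 0))"
    using assms(3) by (auto simp: fun_eq_iff)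
  then show ?thesis using good_add[OF good_pos[OF assms(1)] good_neg[OF assms(2)]] by simp
qed

definition sQ :: "nat \<Rightarrow> (nat \<Rightarrow> nat \<Rightarrow> real) \<Rightarrow> nat \<Rightarrow> nat \<Rightarrow> real" where
  "sQ n Y = fst (SOME (Q, l). spec_decomp n Y Q l)"
definition sl :: "nat \<Rightarrow> (nat \<Rightarrow> nat \<Rightarrow> real) \<Rightarrow> nat \<Rightarrow> real" where
  "sl n Y = snd (SOME (Q, l). spec_decomp n Y Q l)"

lemma mfun_eq: "mfun n f Y = (\<lambda>i j. \<Sum>k<n. of_real (sQ n Y i k) * f (sl n Y k) * of_real (sQ n Y j k))"
  unfolding mfun_def sQ_def sl_def by (simp add: Let_def split_beta)

lemma sQ_spec: "symm n Y \<Longrightarrow> spec_decomp n Y (sQ n Y) (sl n Y)"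
proof -
  assume "symm n Y"
  then obtain Q l where "spec_decomp n Y Q l" using spec_exists by blast
  hence ex: "\<exists>p. (\<lambda>(Q, l). spec_decomp n Y Q l) p" by auto
  define p where "p = (SOME (Q, l). spec_decomp n Y Q l)"
  have "(\<lambda>(Q, l). spec_decomp n Y Q l) p" unfolding p_def by (rule someI_ex[OF ex])
  then show ?thesis unfolding sQ_def sl_def p_def[symmetric] by (simp add: split_beta)
qed

lemma good_mfun:
  assumes "good n f" "i < n" "j < n"
  shows "(\<lambda>y. mfun n f (symm_of n y) i j) \<in> borel_measurable (MM n)"
proof -
  obtain G where G1: "\<forall>i<n. \<forall>j<n. (\<lambda>y. G y i j) \<in> borel_measurable (MM n)"
    and G2: "\<forall>y Q l. spec_decomp n (symm_of n y) Q l \<longrightarrow> (\<forall>i<n. \<forall>j<n. G y i j = (\<Sum>k<n. Q i k * f (l k) * Q j k))"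
    using assms(1) unfolding good_def by blast
  have "mfun n f (symm_of n y) i j = G y i j" for y
    using G2 sQ_spec[OF symm_symm_of, of n y] assms(2,3) by (simp add: mfun_eq)
  then show ?thesis using G1 assms(2,3) by simp
qed

lemma mfun_complex:
  fixes F :: "real \<Rightarrow> complex"
  shows "mfun n F Y i j = complex_of_real (mfun n (\<lambda>t. Re (F t)) Y i j) + \<i> * complex_of_real (mfun n (\<lambda>t. Im (F t)) Y i j)"
  by (rule complex_eqI) (simp_all add: mfun_eq Re_sum Im_sum)

lemma good_powr: "good n (\<lambda>t. t powr a)"
proof (rule good_pw)
  show "continuous_on {0<..} (\<lambda>t::real. t powr a)"
    by (intro continuous_intros) auto
  have "continuous_on {..<0} (\<lambda>t::real. exp (a * ln t))"
    by (intro continuous_intros) auto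
  then show "continuous_on {..<0} (\<lambda>t::real. t powr a)"
    by (rule continuous_on_cong[THEN iffD1, rotated 2]) (auto simp: powr_def)
qed simp

lemma cpowr_pos: "0 < t \<Longrightarrow> complex_of_real t powr p = exp (p * complex_of_real (ln t))"
  by (simp add: powr_def Ln_of_real)

lemma cpowr_neg: "t < 0 \<Longrightarrow> complex_of_real t powr p = exp (p * (complex_of_real (ln \<bar>t\<bar>) + complex_of_real pi * \<i>))"
  by (simp add: powr_def Ln_of_real')

lemma cont_cpowr_pos: "continuous_on {0<..} (\<lambda>t. complex_of_real t powr p)"
proof -
  have "continuous_on {0<..} (\<lambda>t. exp (p * complex_of_real (ln t)))"
    by (intro continuous_intros) auto
  then show ?thesis by (rule continuous_on_cong[THEN iffD1, rotated 2]) (auto simp: cpowr_pos)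
qed

lemma cont_cpowr_neg: "continuous_on {..<0} (\<lambda>t. complex_of_real t powr p)"
proof -
  have "continuous_on {..<0} (\<lambda>t. exp (p * (complex_of_real (ln \<bar>t\<bar>) + complex_of_real pi * \<i>)))"
    by (intro continuous_intros) auto
  then show ?thesis by (rule continuous_on_cong[THEN iffD1, rotated 2]) (auto simp: cpowr_neg)
qed

lemma good_cpowr_Re: "good n (\<lambda>t. Re (complex_of_real t powr p))"
  by (rule good_pw) (auto intro: continuous_on_Re cont_cpowr_pos cont_cpowr_neg)

lemma good_cpowr_Im: "good n (\<lambda>t. Im (complex_of_real t powr p))"
  by (rule good_pw) (auto intro: continuous_on_Im cont_cpowr_pos cont_cpowr_neg)


lemma spec_cols:
  assumes "spec_decomp n Y Q l" "i < n" "j < n"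
  shows "(\<Sum>k<n. Q k i * Q k j) = (if i = j then 1 else 0)"
  using assms unfolding spec_decomp_def by auto

lemma spec_quad:
  assumes sd: "spec_decomp n Y Q l"
  shows "bil n Y x x = (\<Sum>k<n. l k * (\<Sum>i<n. Q i k * x i)^2)"
proof -
  have Y: "\<And>i j. i < n \<Longrightarrow> j < n \<Longrightarrow> Y i j = (\<Sum>k<n. Q i k * l k * Q j k)"
    using sd unfolding spec_decomp_def by auto
  have "bil n Y x x = (\<Sum>i<n. \<Sum>j<n. x i * (\<Sum>k<n. Q i k * l k * Q j k) * x j)"
    unfolding bil_def using Y by (intro sum.cong refl) auto
  also have "\<dots> = (\<Sum>i<n. \<Sum>j<n. \<Sum>k<n. x i * Q i k * l k * Q j k * x j)"
    by (simp only: sum_distrib_left sum_distrib_right mult.assoc)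
  also have "\<dots> = (\<Sum>i<n. \<Sum>k<n. \<Sum>j<n. x i * Q i k * l k * Q j k * x j)"
    by (rule sum.cong[OF refl], rule sum.swap)
  also have "\<dots> = (\<Sum>k<n. \<Sum>i<n. \<Sum>j<n. x i * Q i k * l k * Q j k * x j)"
    by (rule sum.swap)
  also have "\<dots> = (\<Sum>k<n. l k * ((\<Sum>i<n. Q i k * x i) * (\<Sum>j<n. Q j k * x j)))"
  proof (rule sum.cong[OF refl])
    fix k
    have "(\<Sum>i<n. Q i k * x i) * (\<Sum>j<n. Q j k * x j) = (\<Sum>i<n. \<Sum>j<n. (Q i k * x i) * (Q j k * x j))"
      by (simp only: sum_product)
    then show "(\<Sum>i<n. \<Sum>j<n. x i * Q i k * l k * Q j k * x j) = l k * ((\<Sum>i<n. Q i k * x i) * (\<Sum>j<n. Q j k * x j))"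
      by (simp add: sum_distrib_left mult_ac)
  qed
  finally show ?thesis by (simp add: power2_eq_square)
qed

lemma spec_parseval:
  assumes sd: "spec_decomp n Y Q l"
  shows "(\<Sum>k<n. (\<Sum>i<n. Q i k * x i)^2) = (\<Sum>i<n. (x i)^2)"
proof -
  have orth: "\<And>a b. a < n \<Longrightarrow> b < n \<Longrightarrow> (\<Sum>m<n. Q a m * Q b m) = (if a = b then 1 else 0)"
    using spec_rows[OF sd] by auto
  have "(\<Sum>k<n. (\<Sum>i<n. Q i k * x i)^2) = (\<Sum>k<n. (\<Sum>i<n. x i * Q i k) * (\<Sum>i<n. Q i k * x i))"
    by (simp add: power2_eq_square mult.commute)
  also have "\<dots> = (\<Sum>i<n. x i * x i)"
    using orth_prod[of n "\<lambda>m k. Q k m" x x] orth by simp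
  finally show ?thesis by (simp add: power2_eq_square)
qed

lemma spec_col_quad:
  assumes sd: "spec_decomp n Y Q l" and k: "k < n"
  shows "bil n Y (\<lambda>i. Q i k) (\<lambda>i. Q i k) = l k"
proof -
  have "bil n Y (\<lambda>i. Q i k) (\<lambda>i. Q i k) = (\<Sum>m<n. l m * (\<Sum>i<n. Q i m * Q i k)^2)"
    by (rule spec_quad[OF sd])
  also have "\<dots> = (\<Sum>m<n. if m = k then l m else 0)"
  proof (rule sum.cong[OF refl])
    fix m assume "m \<in> {..<n}"
    then show "l m * (\<Sum>i<n. Q i m * Q i k)^2 = (if m = k then l m else 0)"
      using spec_cols[OF sd, of m k] k by simp
  qed
  finally show ?thesis using k by simp
qed

lemma posdef_eig:
  assumes pd: "posdef n Y" and sd: "spec_decomp n Y Q l" and k: "k < n"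
  shows "l k > 0"
proof -
  have "(\<Sum>i<n. Q i k * Q i k) = 1" using spec_cols[OF sd k k] by simp
  have "\<exists>i<n. Q i k \<noteq> 0"
  proof (rule ccontr)
    assume "\<not> (\<exists>i<n. Q i k \<noteq> 0)"
    hence "(\<Sum>i<n. Q i k * Q i k) = 0" by simp
    with \<open>(\<Sum>i<n. Q i k * Q i k) = 1\<close> show False by simp
  qed
  moreover note pd[unfolded posdef_def, THEN conjunct2, THEN spec[of _ "\<lambda>i. Q i k"]]
  ultimately have "0 < bil n Y (\<lambda>i. Q i k) (\<lambda>i. Q i k)" unfolding bil_def
    by simp
  then show ?thesis using spec_col_quad[OF sd k] by simp
qed

lemma eig_posdef:
  assumes sym: "symm n Y" and sd: "spec_decomp n Y Q l" and pos: "\<And>k. k < n \<Longrightarrow> l k > 0"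
  shows "posdef n Y"
  unfolding posdef_def
proof (intro conjI allI impI)
  show "\<And>i j. i < n \<Longrightarrow> j < n \<Longrightarrow> Y i j = Y j i" using sym unfolding symm_def by auto
next
  fix x :: "nat \<Rightarrow> real" assume "\<exists>i<n. x i \<noteq> 0"
  then obtain i0 where i0: "i0 < n" "x i0 \<noteq> 0" by blast
  have "0 < (\<Sum>i<n. (x i)^2)"
    using i0 by (intro sum_pos2[of _ i0]) auto
  hence "0 < (\<Sum>k<n. (\<Sum>i<n. Q i k * x i)^2)" using spec_parseval[OF sd] by simp
  have "\<exists>k0<n. (\<Sum>i<n. Q i k0 * x i)^2 \<noteq> 0"
  proof (rule ccontr)
    assume "\<not> (\<exists>k0<n. (\<Sum>i<n. Q i k0 * x i)^2 \<noteq> 0)"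
    hence "(\<Sum>k<n. (\<Sum>i<n. Q i k * x i)^2) = 0" by (intro sum.neutral) auto
    with \<open>0 < (\<Sum>k<n. (\<Sum>i<n. Q i k * x i)^2)\<close> show False by simp
  qed
  then obtain k0 where k0: "k0 < n" "(\<Sum>i<n. Q i k0 * x i)^2 \<noteq> 0" by blast
  have "0 < (\<Sum>k<n. l k * (\<Sum>i<n. Q i k * x i)^2)"
    using k0 pos by (intro sum_pos2[of _ k0]) (auto intro!: mult_nonneg_nonneg simp: less_imp_le)
  then show "0 < (\<Sum>i<n. \<Sum>j<n. x i * Y i j * x j)" using spec_quad[OF sd] unfolding bil_def by simp
qed

lemma posdef_symm: "posdef n Y \<Longrightarrow> symm n Y"
  unfolding posdef_def symm_def by auto

lemma posdef_lower:
  assumes pd: "posdef n V"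
  shows "\<exists>v>0. \<forall>x. v * (\<Sum>i<n. (x i)^2) \<le> bil n V x x"
proof -
  obtain Q l where sd: "spec_decomp n V Q l" using spec_exists[OF posdef_symm[OF pd]] by blast
  define v where "v = Min (insert 1 (l ` {..<n}))"
  have vpos: "v > 0" unfolding v_def using posdef_eig[OF pd sd] by (subst Min_gr_iff) auto
  have vle: "v \<le> l k" if "k < n" for k unfolding v_def using that by (intro Min_le) auto
  have "v * (\<Sum>i<n. (x i)^2) \<le> bil n V x x" for x
  proof -
    have "v * (\<Sum>i<n. (x i)^2) = v * (\<Sum>k<n. (\<Sum>i<n. Q i k * x i)^2)"
      using spec_parseval[OF sd] by simp
    also have "\<dots> = (\<Sum>k<n. v * (\<Sum>i<n. Q i k * x i)^2)"
      by (simp add: sum_distrib_left)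
    also have "\<dots> \<le> (\<Sum>k<n. l k * (\<Sum>i<n. Q i k * x i)^2)"
      using vle by (intro sum_mono mult_right_mono) auto
    finally show ?thesis using spec_quad[OF sd] by simp
  qed
  then show ?thesis using vpos by blast
qed

lemma mtrace_mfun:
  fixes f :: "real \<Rightarrow> 'a::real_algebra_1"
  assumes sym: "symm n Y"
  shows "mtrace n (mfun n f Y) = (\<Sum>k<n. f (sl n Y k))"
proof -
  have sd: "spec_decomp n Y (sQ n Y) (sl n Y)" by (rule sQ_spec[OF sym])
  have "mtrace n (mfun n f Y) = (\<Sum>i<n. \<Sum>k<n. of_real (sQ n Y i k) * f (sl n Y k) * of_real (sQ n Y i k))"
    unfolding mtrace_def mfun_eq ..
  also have "\<dots> = (\<Sum>i<n. \<Sum>k<n. (sQ n Y i k * sQ n Y i k) *\<^sub>R f (sl n Y k))"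
    by (simp add: of_real_def)
  also have "\<dots> = (\<Sum>k<n. \<Sum>i<n. (sQ n Y i k * sQ n Y i k) *\<^sub>R f (sl n Y k))"
    by (rule sum.swap)
  also have "\<dots> = (\<Sum>k<n. (\<Sum>i<n. sQ n Y i k * sQ n Y i k) *\<^sub>R f (sl n Y k))"
    by (simp add: scaleR_sum_left)
  also have "\<dots> = (\<Sum>k<n. f (sl n Y k))"
    using spec_cols[OF sd] by (intro sum.cong refl) auto
  finally show ?thesis .
qed


definition MT :: "nat \<Rightarrow> (nat \<Rightarrow> nat \<Rightarrow> real) \<Rightarrow> real Matrix.mat" where
  "MT n A = Matrix.mat n n (\<lambda>(i, j). A i j)"

lemma mdet_MT: "mdet n A = Determinant.det (MT n A)"
  unfolding det_def mdet_def MT_def by (simp add: atLeast0LessThan)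

lemma MT_carrier[simp]: "MT n A \<in> carrier_mat n n"
  unfolding MT_def by simp

lemma MT_mult: "MT n A * MT n B = MT n (\<lambda>i j. \<Sum>k<n. A i k * B k j)"
  unfolding MT_def by (rule eq_matI) (auto simp: scalar_prod_def atLeast0LessThan)

lemma MT_transpose: "transpose_mat (MT n A) = MT n (\<lambda>i j. A j i)"
  unfolding MT_def by (rule eq_matI) auto

lemma spec_det:
  assumes sd: "spec_decomp n Y Q l"
  shows "mdet n Y = (\<Prod>k<n. l k)"
proof -
  define D where "D = (\<lambda>i j. if i = j then l i else (0::real))"
  have "MT n Y = MT n (\<lambda>i j. \<Sum>k<n. (\<Sum>m<n. Q i m * D m k) * Q j k)"
  proof -
    have "(\<Sum>m<n. Q i m * D m k) = Q i k * l k" if "k < n" for i k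
      using that unfolding D_def by (simp add: if_distrib cong: if_cong)
    then have "(\<lambda>i j. \<Sum>k<n. (\<Sum>m<n. Q i m * D m k) * Q j k) i j = Y i j" if "i < n" "j < n" for i j
      using sd that unfolding spec_decomp_def by (auto intro!: sum.cong)
    then show ?thesis unfolding MT_def by (intro eq_matI) auto
  qed
  also have "\<dots> = MT n Q * MT n D * transpose_mat (MT n Q)"
    by (simp add: MT_mult MT_transpose)
  finally have Y: "MT n Y = MT n Q * MT n D * transpose_mat (MT n Q)" .
  have QQ: "transpose_mat (MT n Q) * MT n Q = 1\<^sub>m n"
    unfolding MT_transpose MT_mult
    using spec_cols[OF sd] unfolding MT_def by (intro eq_matI) auto
  have dQ: "Determinant.det (MT n Q) * Determinant.det (MT n Q) = 1"
    using arg_cong[OF QQ, of Determinant.det] det_mult[of "transpose_mat (MT n Q)" n "MT n Q"]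
      det_transpose[of "MT n Q" n] by simp
  have ut: "upper_triangular (MT n D)" unfolding MT_def D_def by (auto simp: upper_triangular_def)
  have dD: "Determinant.det (MT n D) = (\<Prod>k<n. l k)"
  proof -
    have "Determinant.det (MT n D) = prod_list (diag_mat (MT n D))"
      by (rule det_upper_triangular[OF ut MT_carrier])
    also have "diag_mat (MT n D) = map l [0..<n]"
      unfolding diag_mat_def MT_def D_def by (auto intro: nth_equalityI)
    also have "prod_list (map l [0..<n]) = (\<Prod>k<n. l k)"
      by (simp add: prod.distinct_set_conv_list[symmetric] atLeast0LessThan)
    finally show ?thesis .
  qed
  have "mdet n Y = Determinant.det (MT n Q) * Determinant.det (MT n D) * Determinant.det (MT n Q)"
    unfolding mdet_MT Y
    by (simp add: det_mult[of _ n] det_transpose[OF MT_carrier] mult_carrier_mat[of _ n n _ n])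
  also have "\<dots> = (\<Prod>k<n. l k)" using dQ dD by (simp add: mult_ac)
  finally show ?thesis .
qed


lemma S1:
  fixes g d :: real
  assumes g: "0 \<le> g" and d: "0 < d"
  shows "\<exists>K>0. \<forall>u>0. u powr g \<le> K * exp (d * u)"
proof (cases "g = 0")
  case True
  then show ?thesis using d by (intro exI[of _ 1]) auto
next
  case False
  hence g: "g > 0" using g by simp
  define K where "K = exp (g * ln (g / d))"
  have "u powr g \<le> K * exp (d * u)" if u: "u > 0" for u
  proof -
    have "ln u = ln (d * u / g) + ln (g / d)"
      using u g d by (simp add: ln_div ln_mult)
    also have "\<dots> \<le> (d * u / g - 1) + ln (g / d)"
      using u g d by (intro add_right_mono ln_le_minus_one) auto
    finally have "g * ln u \<le> d * u + g * ln (g / d)"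
      using g by (simp add: field_simps)
    hence "exp (g * ln u) \<le> exp (d * u + g * ln (g / d))" by simp
    then show ?thesis using u unfolding K_def by (simp add: powr_def exp_add mult.commute)
  qed
  moreover have "K > 0" unfolding K_def by simp
  ultimately show ?thesis by blast
qed

lemma S2:
  fixes b c1 c2 \<alpha> :: real
  assumes c1: "0 < c1" and c2: "0 < c2" and al: "0 < \<alpha>"
  shows "\<exists>K>0. \<forall>t>0. t powr b * exp (- c1 * t powr \<alpha> - c2 * t powr (- \<alpha>)) \<le> K * exp (- (c1 / 2) * t powr \<alpha>)"
proof (cases "0 \<le> b")
  case True
  obtain K where K: "K > 0" "\<And>u. u > 0 \<Longrightarrow> u powr (b / \<alpha>) \<le> K * exp ((c1 / 2) * u)"
    using S1[of "b / \<alpha>" "c1 / 2"] True al c1 by auto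
  have "t powr b * exp (- c1 * t powr \<alpha> - c2 * t powr (- \<alpha>)) \<le> K * exp (- (c1 / 2) * t powr \<alpha>)" if t: "t > 0" for t
  proof -
    define s where "s = t powr \<alpha>"
    have s: "s > 0" unfolding s_def using t by simp
    have tb: "t powr b = s powr (b / \<alpha>)" unfolding s_def using al by (simp add: powr_powr)
    have "t powr b * exp (- c1 * s - c2 * t powr (- \<alpha>)) \<le> t powr b * exp (- c1 * s)"
      using t c2 by (intro mult_left_mono) auto
    also have "\<dots> \<le> K * exp ((c1 / 2) * s) * exp (- c1 * s)"
      unfolding tb using K(2)[OF s] by (intro mult_right_mono) auto
    also have "\<dots> = K * exp (- (c1 / 2) * s)" by (simp add: mult.assoc exp_add[symmetric])
    finally show ?thesis unfolding s_def .
  qed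
  then show ?thesis using K(1) by blast
next
  case False
  obtain K where K: "K > 0" "\<And>u. u > 0 \<Longrightarrow> u powr (- b / \<alpha>) \<le> K * exp (c2 * u)"
  proof -
    have "0 \<le> - b / \<alpha>" using False al by (simp add: divide_nonpos_pos)
    from S1[OF this c2] show ?thesis using that by blast
  qed
  have "t powr b * exp (- c1 * t powr \<alpha> - c2 * t powr (- \<alpha>)) \<le> K * exp (- (c1 / 2) * t powr \<alpha>)" if t: "t > 0" for t
  proof -
    define s where "s = t powr \<alpha>"
    have s: "s > 0" unfolding s_def using t by simp
    have tb: "t powr b = (inverse s) powr (- b / \<alpha>)" unfolding s_def using al t
      by (simp add: powr_powr powr_minus[symmetric])
    have ta: "t powr (- \<alpha>) = inverse s" unfolding s_def by (simp add: powr_minus)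
    have "t powr b * exp (- c1 * s - c2 * t powr (- \<alpha>)) = t powr b * exp (- c2 * inverse s) * exp (- c1 * s)"
      unfolding ta by (simp add: exp_add[symmetric] exp_diff mult.assoc) (simp add: exp_minus field_simps)
    also have "\<dots> \<le> K * exp (c2 * inverse s) * exp (- c2 * inverse s) * exp (- c1 * s)"
      unfolding tb using K(2)[of "inverse s"] s by (intro mult_right_mono) auto
    also have "\<dots> = K * exp (- c1 * s)" by (simp add: mult.assoc exp_add[symmetric])
    also have "\<dots> \<le> K * exp (- (c1 / 2) * s)" using K(1) c1 s by (intro mult_left_mono) auto
    finally show ?thesis unfolding s_def .
  qed
  then show ?thesis using K(1) by blast
qed

lemma S3:
  fixes a b1 b2 c1 c2 \<alpha> :: real
  assumes c1: "0 < c1" and c2: "0 < c2" and al: "0 < \<alpha>"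
  shows "\<exists>K>0. \<forall>t>0. t powr a * (1 + t powr b1 + t powr b2) * exp (- c1 * t powr \<alpha> - c2 * t powr (- \<alpha>))
            \<le> K * exp (- (c1 / 2) * t powr \<alpha>)"
proof -
  obtain K1 where K1: "K1 > 0" "\<And>t. t > 0 \<Longrightarrow> t powr a * exp (- c1 * t powr \<alpha> - c2 * t powr (- \<alpha>)) \<le> K1 * exp (- (c1 / 2) * t powr \<alpha>)"
    using S2[OF c1 c2 al, of a] by blast
  obtain K2 where K2: "K2 > 0" "\<And>t. t > 0 \<Longrightarrow> t powr (a + b1) * exp (- c1 * t powr \<alpha> - c2 * t powr (- \<alpha>)) \<le> K2 * exp (- (c1 / 2) * t powr \<alpha>)"
    using S2[OF c1 c2 al, of "a + b1"] by blast
  obtain K3 where K3: "K3 > 0" "\<And>t. t > 0 \<Longrightarrow> t powr (a + b2) * exp (- c1 * t powr \<alpha> - c2 * t powr (- \<alpha>)) \<le> K3 * exp (- (c1 / 2) * t powr \<alpha>)"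
    using S2[OF c1 c2 al, of "a + b2"] by blast
  have "t powr a * (1 + t powr b1 + t powr b2) * exp (- c1 * t powr \<alpha> - c2 * t powr (- \<alpha>))
            \<le> (K1 + K2 + K3) * exp (- (c1 / 2) * t powr \<alpha>)" if t: "t > 0" for t
  proof -
    have "t powr a * (1 + t powr b1 + t powr b2) * exp (- c1 * t powr \<alpha> - c2 * t powr (- \<alpha>))
      = t powr a * exp (- c1 * t powr \<alpha> - c2 * t powr (- \<alpha>)) + t powr (a + b1) * exp (- c1 * t powr \<alpha> - c2 * t powr (- \<alpha>))
        + t powr (a + b2) * exp (- c1 * t powr \<alpha> - c2 * t powr (- \<alpha>))"
      by (simp add: powr_add algebra_simps)
    also have "\<dots> \<le> K1 * exp (- (c1 / 2) * t powr \<alpha>) + K2 * exp (- (c1 / 2) * t powr \<alpha>) + K3 * exp (- (c1 / 2) * t powr \<alpha>)"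
      using K1(2)[OF t] K2(2)[OF t] K3(2)[OF t] by linarith
    finally show ?thesis by (simp add: algebra_simps)
  qed
  moreover have "K1 + K2 + K3 > 0" using K1 K2 K3 by simp
  ultimately show ?thesis by blast
qed

lemma S4:
  fixes c \<alpha> :: real
  assumes c: "0 < c" and al: "0 < \<alpha>"
  shows "integrable lborel (\<lambda>x::real. exp (- c * \<bar>x\<bar> powr \<alpha>))"
proof -
  obtain K where K: "K > 0" "\<And>u. u > 0 \<Longrightarrow> u powr (2 / \<alpha>) \<le> K * exp (c * u)"
    using S1[of "2 / \<alpha>" c] al c by auto
  have bnd: "exp (- c * \<bar>x\<bar> powr \<alpha>) \<le> (1 + K) * inverse (1 + x^2)" for x :: real
  proof (cases "x = 0")
    case True then show ?thesis using K by simp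
  next
    case False
    define s where "s = \<bar>x\<bar> powr \<alpha>"
    have s: "s > 0" using False unfolding s_def by simp
    have "x^2 = s powr (2 / \<alpha>)" unfolding s_def using al False
      by (simp add: powr_powr)
    hence x2: "x^2 \<le> K * exp (c * s)" using K(2)[OF s] by simp
    have "(1 + x^2) * exp (- c * s) \<le> (1 + K * exp (c * s)) * exp (- c * s)"
      using x2 by (intro mult_right_mono) auto
    also have "\<dots> = exp (- c * s) + K" by (simp add: algebra_simps exp_add[symmetric])
    also have "\<dots> \<le> 1 + K" using c s by simp
    finally have "(1 + x^2) * exp (- c * s) \<le> 1 + K" .
    moreover have "1 + x^2 > 0" by (simp add: add_pos_nonneg)
    ultimately show ?thesis unfolding s_def by (simp add: field_simps)
  qed
  have int: "integrable lborel (\<lambda>x::real. inverse (1 + x^2))"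
    using integrable_inverse_1_plus_square by (simp add: set_integrable_def einterval_def)
  show ?thesis
  proof (rule Bochner_Integration.integrable_bound[OF integrable_mult_right[OF int, of "1 + K"]])
    show "(\<lambda>x::real. exp (- c * \<bar>x\<bar> powr \<alpha>)) \<in> borel_measurable lborel" by measurable
    show "AE x in lborel. norm (exp (- c * \<bar>x\<bar> powr \<alpha>)) \<le> norm ((1 + K) * inverse (1 + x^2))"
      using bnd K(1) by (intro AE_I2) (simp add: add_pos_nonneg abs_of_pos)
  qed
qed


lemma count_iff:
  "(\<Sum>k<n. (if P k then 1 else 0::real)) = real n \<longleftrightarrow> (\<forall>k<n. P k)"
proof
  assume h: "(\<Sum>k<n. (if P k then 1 else 0::real)) = real n"
  show "\<forall>k<n. P k"
  proof (rule ccontr)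
    assume "\<not> (\<forall>k<n. P k)"
    then obtain k0 where k0: "k0 < n" "\<not> P k0" by blast
    have "(\<Sum>k<n. (if P k then 1 else 0::real)) < (\<Sum>k<n. 1)"
      by (rule sum_strict_mono_ex1) (use k0 in auto)
    with h show False by simp
  qed
qed simp

lemma Pset_iff: "y \<in> Pset n \<longleftrightarrow> (\<forall>k<n. 0 < sl n (symm_of n y) k)"
proof -
  have sd: "spec_decomp n (symm_of n y) (sQ n (symm_of n y)) (sl n (symm_of n y))"
    by (rule sQ_spec[OF symm_symm_of])
  show ?thesis unfolding Pset_def
    using posdef_eig[OF _ sd] eig_posdef[OF symm_symm_of sd] by auto
qed

lemma mtrace_meas:
  assumes "good n f"
  shows "(\<lambda>y. mtrace n (mfun n f (symm_of n y))) \<in> borel_measurable (MM n)"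
  unfolding mtrace_def using good_mfun[OF assms] by (intro borel_measurable_sum) auto

lemma ind_Pset_eq:
  "(\<lambda>y. indicator (Pset n) y :: real) =
   (\<lambda>y. if mtrace n (mfun n (\<lambda>t. if 0 < t then 1 else 0 :: real) (symm_of n y)) = real n then 1 else 0)"
  by (rule ext) (simp add: mtrace_mfun[OF symm_symm_of] count_iff Pset_iff[symmetric])

lemma Pind_meas: "(\<lambda>y. indicator (Pset n) y :: real) \<in> borel_measurable (MM n)"
proof -
  have g: "good n (\<lambda>t. if 0 < t then 1 else 0 :: real)"
    using good_pos[of "\<lambda>_. 1"] by (simp add: continuous_on_const)
  note [measurable] = mtrace_meas[OF g]
  show ?thesis unfolding ind_Pset_eq by measurable
qed

lemma mdet_meas: "(\<lambda>y. mdet n (symm_of n y)) \<in> borel_measurable (MM n)"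
  unfolding mdet_def
proof (intro borel_measurable_sum borel_measurable_times borel_measurable_const borel_measurable_prod)
  fix p i assume p: "p \<in> {p. p permutes {..<n}}" and i: "i \<in> {..<n}"
  have "p i < n" using p i permutes_in_image[of p "{..<n}" i] by auto
  then show "(\<lambda>y. symm_of n y i (p i)) \<in> borel_measurable (MM n)" using i by simp
qed

lemma mpc_meas:
  assumes "i < n" "j < n"
  shows "(\<lambda>y. mpow_cplx n (symm_of n y) p i j) \<in> borel_measurable (MM n)"
proof -
  note [measurable] = good_mfun[OF good_cpowr_Re assms] good_mfun[OF good_cpowr_Im assms]
  show ?thesis unfolding mpow_cplx_def mfun_complex by measurable
qed

lemma T_meas: "(\<lambda>y. mtrace n (mpow_cplx n (symm_of n y) p)) \<in> borel_measurable (MM n)"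
  unfolding mtrace_def using mpc_meas by (intro borel_measurable_sum) auto

lemma trmul_meas:
  "(\<lambda>y. \<Sum>i<n. mmul n V (mpow_real n (symm_of n y) a) i i) \<in> borel_measurable (MM n)"
  unfolding mmul_def mpow_real_def
  using good_mfun[OF good_powr]
  by (intro borel_measurable_sum borel_measurable_times borel_measurable_const) auto

lemma etr_eq: "etr n (\<lambda>i j. - A i j - B i j) = exp (- (\<Sum>i<n. A i i) - (\<Sum>i<n. B i i))"
  unfolding etr_def mtrace_def by (simp add: sum_subtractf sum_negf)

lemma E_meas: "(\<lambda>y. etr n (\<lambda>i j. - mmul n V (mpow_real n (symm_of n y) a) i j
                                   - mmul n W (mpow_real n (symm_of n y) b) i j)) \<in> borel_measurable (MM n)"
proof -
  note [measurable] = trmul_meas[of n V a] trmul_meas[of n W b]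
  show ?thesis unfolding etr_eq by measurable
qed


lemma tr_quad:
  "(\<Sum>i<n. mmul n V (mpow_real n Y a) i i) = (\<Sum>k<n. sl n Y k powr a * bil n V (\<lambda>i. sQ n Y i k) (\<lambda>i. sQ n Y i k))"
proof -
  define Q where "Q = sQ n Y"
  define f where "f = (\<lambda>k. sl n Y k powr a)"
  have "(\<Sum>i<n. mmul n V (mpow_real n Y a) i i) = (\<Sum>i<n. \<Sum>m<n. V i m * (\<Sum>k<n. Q m k * f k * Q i k))"
    unfolding mmul_def mpow_real_def mfun_eq Q_def f_def by simp
  also have "\<dots> = (\<Sum>i<n. \<Sum>m<n. \<Sum>k<n. f k * (Q i k * V i m * Q m k))"
    by (simp add: sum_distrib_left mult_ac)
  also have "\<dots> = (\<Sum>i<n. \<Sum>k<n. \<Sum>m<n. f k * (Q i k * V i m * Q m k))"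
    by (rule sum.cong[OF refl], rule sum.swap)
  also have "\<dots> = (\<Sum>k<n. \<Sum>i<n. \<Sum>m<n. f k * (Q i k * V i m * Q m k))"
    by (rule sum.swap)
  also have "\<dots> = (\<Sum>k<n. f k * bil n V (\<lambda>i. Q i k) (\<lambda>i. Q i k))"
    unfolding bil_def by (simp add: sum_distrib_left)
  finally show ?thesis unfolding Q_def f_def .
qed

lemma tr_lower:
  assumes sym: "symm n Y" and vV: "\<And>x. v * (\<Sum>i<n. (x i)^2) \<le> bil n V x x"
  shows "v * (\<Sum>k<n. sl n Y k powr a) \<le> (\<Sum>i<n. mmul n V (mpow_real n Y a) i i)"
proof -
  have sd: "spec_decomp n Y (sQ n Y) (sl n Y)" by (rule sQ_spec[OF sym])
  have "v * (\<Sum>k<n. sl n Y k powr a) = (\<Sum>k<n. sl n Y k powr a * (v * (\<Sum>i<n. (sQ n Y i k)^2)))"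
    using spec_cols[OF sd] by (simp add: sum_distrib_left power2_eq_square mult_ac)
  also have "\<dots> \<le> (\<Sum>k<n. sl n Y k powr a * bil n V (\<lambda>i. sQ n Y i k) (\<lambda>i. sQ n Y i k))"
    using vV by (intro sum_mono mult_left_mono) auto
  finally show ?thesis unfolding tr_quad .
qed

lemma sum_le_prod1:
  fixes x :: "nat \<Rightarrow> real"
  assumes "\<And>k. 0 \<le> x k"
  shows "(\<Sum>k<n. x k) \<le> (\<Prod>k<n. 1 + x k)"
proof (induction n)
  case 0 then show ?case by simp
next
  case (Suc n)
  have P1: "1 \<le> (\<Prod>k<n. 1 + x k)" using assms by (intro prod_ge_1) auto
  have "(\<Sum>k<Suc n. x k) = (\<Sum>k<n. x k) + x n" by simp
  also have "\<dots> \<le> (\<Prod>k<n. 1 + x k) + (\<Prod>k<n. 1 + x k) * x n"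
    using Suc.IH P1 assms[of n] by (intro add_mono) (auto intro: mult_le_cancel_right1[THEN iffD2] simp: mult_right_mono[of 1, simplified])
  also have "\<dots> = (\<Prod>k<Suc n. 1 + x k)" by (simp add: algebra_simps)
  finally show ?case .
qed

lemma abs_mult_le_sq: "\<bar>a\<bar> * \<bar>b\<bar> \<le> (a^2 + b^2) / 2" for a b :: real
proof -
  have "0 \<le> (\<bar>a\<bar> - \<bar>b\<bar>)^2" by simp
  then show ?thesis by (simp add: power2_eq_square algebra_simps)
qed

lemma coord_bound:
  assumes yP: "y \<in> Pset n" and ij: "(i, j) \<in> upper n" and al: "0 < \<alpha>"
  shows "\<bar>y (i, j)\<bar> powr \<alpha> \<le> (\<Sum>k<n. sl n (symm_of n y) k powr \<alpha>)"
proof -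
  define Q where "Q = sQ n (symm_of n y)"
  define l where "l = sl n (symm_of n y)"
  have sd: "spec_decomp n (symm_of n y) Q l" unfolding Q_def l_def by (rule sQ_spec[OF symm_symm_of])
  have lpos: "\<And>k. k < n \<Longrightarrow> 0 < l k" using yP unfolding Pset_iff l_def by blast
  have i: "i \<le> j" "j < n" using ij unfolding upper_def by auto
  hence n: "n > 0" "i < n" by auto
  have "symm_of n y i j = (\<Sum>k<n. Q i k * l k * Q j k)"
    using sd i n unfolding spec_decomp_def by blast
  moreover have "symm_of n y i j = y (i, j)" using i unfolding symm_of_def by (simp add: min_def max_def)
  ultimately have yij: "y (i, j) = (\<Sum>k<n. Q i k * l k * Q j k)" by simp
  define M where "M = Max (l ` {..<n})"
  have "M \<in> l ` {..<n}" unfolding M_def using n by (intro Max_in) auto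
  then obtain k0 where k0: "k0 < n" "M = l k0" by auto
  have lM: "l k \<le> M" if "k < n" for k unfolding M_def using that by (intro Max_ge) auto
  have "\<bar>y (i, j)\<bar> \<le> (\<Sum>k<n. \<bar>Q i k\<bar> * l k * \<bar>Q j k\<bar>)"
    unfolding yij using lpos by (intro order.trans[OF sum_abs]) (auto simp: abs_mult less_imp_le)
  also have "\<dots> \<le> (\<Sum>k<n. M * (\<bar>Q i k\<bar> * \<bar>Q j k\<bar>))"
    using lM by (intro sum_mono) (auto simp: mult_ac intro: mult_right_mono)
  also have "\<dots> = M * (\<Sum>k<n. \<bar>Q i k\<bar> * \<bar>Q j k\<bar>)" by (simp add: sum_distrib_left)
  also have "(\<Sum>k<n. \<bar>Q i k\<bar> * \<bar>Q j k\<bar>) \<le> (\<Sum>k<n. ((Q i k)^2 + (Q j k)^2) / 2)"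
    by (intro sum_mono abs_mult_le_sq)
  also have "\<dots> = ((\<Sum>k<n. Q i k * Q i k) + (\<Sum>k<n. Q j k * Q j k)) / 2"
    by (simp add: sum.distrib sum_divide_distrib[symmetric] power2_eq_square)
  also have "\<dots> = 1" using spec_rows[OF sd n(2) n(2)] spec_rows[OF sd i(2) i(2)] by simp
  finally have "\<bar>y (i, j)\<bar> \<le> l k0" using k0 lpos[OF k0(1)] by simp
  hence "\<bar>y (i, j)\<bar> powr \<alpha> \<le> l k0 powr \<alpha>" using al by (intro powr_mono2) auto
  also have "\<dots> \<le> (\<Sum>k<n. l k powr \<alpha>)" using k0 by (intro member_le_sum) auto
  finally show ?thesis unfolding l_def .
qed

lemma finite_upper: "finite (upper n)"
  by (rule finite_subset[of _ "{..<n} \<times> {..<n}"]) (auto simp: upper_def)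

lemma coord_sum_bound:
  assumes yP: "y \<in> Pset n" and al: "0 < \<alpha>"
  shows "(\<Sum>ij\<in>upper n. \<bar>y ij\<bar> powr \<alpha>) \<le> real (card (upper n)) * (\<Sum>k<n. sl n (symm_of n y) k powr \<alpha>)"
proof -
  have "(\<Sum>ij\<in>upper n. \<bar>y ij\<bar> powr \<alpha>) \<le> (\<Sum>ij\<in>upper n. (\<Sum>k<n. sl n (symm_of n y) k powr \<alpha>))"
    using coord_bound[OF yP _ al] by (intro sum_mono) auto
  then show ?thesis by simp
qed


lemma main_bound:
  assumes V: "posdef n V" and W: "posdef n W" and al: "0 < \<alpha>"
  shows "\<exists>K c. 0 < c \<and> 0 \<le> K \<and> (\<forall>y\<in>Pset n. \<forall>X::complex.
     norm X \<le> (\<Sum>k<n. sl n (symm_of n y) k powr b1 + sl n (symm_of n y) k powr b2) \<longrightarrow>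
     mdet n (symm_of n y) powr (- (real n + 1) / 2) *
       norm (complex_of_real (mdet n (symm_of n y)) powr \<nu> * X *
         complex_of_real (etr n (\<lambda>i j. - mmul n V (mpow_real n (symm_of n y) \<alpha>) i j
                                     - mmul n W (mpow_real n (symm_of n y) (- \<alpha>)) i j)))
     \<le> K * (\<Prod>ij\<in>upper n. exp (- c * \<bar>y ij\<bar> powr \<alpha>)))"
proof -
  obtain v where v: "v > 0" "\<And>x. v * (\<Sum>i<n. (x i)^2) \<le> bil n V x x" using posdef_lower[OF V] by blast
  obtain w where w: "w > 0" "\<And>x. w * (\<Sum>i<n. (x i)^2) \<le> bil n W x x" using posdef_lower[OF W] by blast
  define a0 where "a0 = Re \<nu> - (real n + 1) / 2"
  obtain K0 where K0: "K0 > 0" "\<And>t. t > 0 \<Longrightarrow> t powr a0 * (1 + t powr b1 + t powr b2) * exp (- v * t powr \<alpha> - w * t powr (- \<alpha>))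
            \<le> K0 * exp (- (v / 2) * t powr \<alpha>)"
    using S3[OF v(1) w(1) al, of a0 b1 b2] by blast
  define N where "N = real (card (upper n))"
  define c where "c = v / (2 * (N + 1))"
  have N0: "N \<ge> 0" unfolding N_def by simp
  have c0: "c > 0" unfolding c_def using v N0 by simp
  have main: "mdet n (symm_of n y) powr (- (real n + 1) / 2) *
       norm (complex_of_real (mdet n (symm_of n y)) powr \<nu> * X *
         complex_of_real (etr n (\<lambda>i j. - mmul n V (mpow_real n (symm_of n y) \<alpha>) i j
                                     - mmul n W (mpow_real n (symm_of n y) (- \<alpha>)) i j)))
     \<le> K0 ^ n * (\<Prod>ij\<in>upper n. exp (- c * \<bar>y ij\<bar> powr \<alpha>))"
    if yP: "y \<in> Pset n" and X: "norm X \<le> (\<Sum>k<n. sl n (symm_of n y) k powr b1 + sl n (symm_of n y) k powr b2)" for y X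
  proof -
    define Y where "Y = symm_of n y"
    define l where "l = sl n Y"
    have sd: "spec_decomp n Y (sQ n Y) l" unfolding Y_def l_def by (rule sQ_spec[OF symm_symm_of])
    have lpos: "\<And>k. k < n \<Longrightarrow> 0 < l k" using yP unfolding Pset_iff l_def Y_def by blast
    define D where "D = mdet n Y"
    have D: "D = (\<Prod>k<n. l k)" unfolding D_def by (rule spec_det[OF sd])
    have Dpos: "D > 0" unfolding D using lpos by (intro prod_pos) auto
    define tV where "tV = (\<Sum>i<n. mmul n V (mpow_real n Y \<alpha>) i i)"
    define tW where "tW = (\<Sum>i<n. mmul n W (mpow_real n Y (- \<alpha>)) i i)"
    define E where "E = etr n (\<lambda>i j. - mmul n V (mpow_real n Y \<alpha>) i j - mmul n W (mpow_real n Y (- \<alpha>)) i j)"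
    have E: "E = exp (- tV - tW)" unfolding E_def tV_def tW_def by (rule etr_eq)
    have tV: "v * (\<Sum>k<n. l k powr \<alpha>) \<le> tV" unfolding tV_def l_def
      by (rule tr_lower[OF symm_symm_of[of n y, folded Y_def] v(2)])
    have tW: "w * (\<Sum>k<n. l k powr (- \<alpha>)) \<le> tW" unfolding tW_def l_def
      by (rule tr_lower[OF symm_symm_of[of n y, folded Y_def] w(2)])
    have Eb: "E \<le> (\<Prod>k<n. exp (- v * l k powr \<alpha> - w * l k powr (- \<alpha>)))"
    proof -
      have "E \<le> exp (- (v * (\<Sum>k<n. l k powr \<alpha>)) - w * (\<Sum>k<n. l k powr (- \<alpha>)))"
        unfolding E using tV tW by simp
      also have "\<dots> = exp (\<Sum>k<n. - v * l k powr \<alpha> - w * l k powr (- \<alpha>))"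
        by (simp add: sum_distrib_left sum_subtractf sum_negf)
      also have "\<dots> = (\<Prod>k<n. exp (- v * l k powr \<alpha> - w * l k powr (- \<alpha>)))" by (simp add: exp_sum)
      finally show ?thesis .
    qed
    have Epos: "E > 0" unfolding E by simp
    have nD: "norm (complex_of_real D powr \<nu>) = D powr Re \<nu>"
      using Dpos by (subst norm_powr_real_powr) auto
    have Xb: "norm X \<le> (\<Prod>k<n. 1 + l k powr b1 + l k powr b2)"
    proof -
      have "norm X \<le> (\<Sum>k<n. l k powr b1 + l k powr b2)" using X unfolding l_def Y_def .
      also have "\<dots> \<le> (\<Prod>k<n. 1 + (l k powr b1 + l k powr b2))" by (rule sum_le_prod1) simp
      finally show ?thesis by (simp add: add.assoc)
    qed
    have "D powr (- (real n + 1) / 2) * norm (complex_of_real D powr \<nu> * X * complex_of_real E)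
        = D powr a0 * norm X * E"
    proof -
      have ex: "- (real n + 1) / 2 + Re \<nu> = a0" unfolding a0_def by (simp add: field_simps)
      have "D powr (- (real n + 1) / 2) * D powr Re \<nu> = D powr a0"
        unfolding ex[symmetric] by (rule powr_add[symmetric])
      then show ?thesis using Epos by (simp add: norm_mult nD abs_of_pos mult.assoc[symmetric])
    qed
    also have "\<dots> \<le> (\<Prod>k<n. l k powr a0) * (\<Prod>k<n. 1 + l k powr b1 + l k powr b2) * (\<Prod>k<n. exp (- v * l k powr \<alpha> - w * l k powr (- \<alpha>)))"
      unfolding D prod_powr_distrib
      by (intro mult_mono Xb Eb) (auto intro!: prod_nonneg mult_nonneg_nonneg simp: less_imp_le Epos)
    also have "\<dots> = (\<Prod>k<n. l k powr a0 * (1 + l k powr b1 + l k powr b2) * exp (- v * l k powr \<alpha> - w * l k powr (- \<alpha>)))"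
      by (simp add: prod.distrib)
    also have "\<dots> \<le> (\<Prod>k<n. K0 * exp (- (v / 2) * l k powr \<alpha>))"
      using K0(2) lpos by (intro prod_mono) (auto intro!: mult_nonneg_nonneg)
    also have "\<dots> = K0 ^ n * exp (- (v / 2) * (\<Sum>k<n. l k powr \<alpha>))"
      by (simp add: prod.distrib exp_sum sum_distrib_left)
    also have "\<dots> \<le> K0 ^ n * exp (- c * (\<Sum>ij\<in>upper n. \<bar>y ij\<bar> powr \<alpha>))"
    proof -
      have S0: "0 \<le> (\<Sum>k<n. l k powr \<alpha>)" by (intro sum_nonneg) simp
      have cs: "(\<Sum>ij\<in>upper n. \<bar>y ij\<bar> powr \<alpha>) \<le> N * (\<Sum>k<n. l k powr \<alpha>)"
        using coord_sum_bound[OF yP al] unfolding N_def l_def Y_def .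
      have "c * (\<Sum>ij\<in>upper n. \<bar>y ij\<bar> powr \<alpha>) \<le> c * (N * (\<Sum>k<n. l k powr \<alpha>))"
        using cs c0 by (intro mult_left_mono) auto
      also have "\<dots> = (v / 2) * (N / (N + 1)) * (\<Sum>k<n. l k powr \<alpha>)"
        unfolding c_def using N0 by (simp add: field_simps)
      also have "\<dots> \<le> (v / 2) * 1 * (\<Sum>k<n. l k powr \<alpha>)"
        using N0 v S0 by (intro mult_right_mono mult_left_mono) auto
      finally have "c * (\<Sum>ij\<in>upper n. \<bar>y ij\<bar> powr \<alpha>) \<le> (v / 2) * (\<Sum>k<n. l k powr \<alpha>)" by simp
      then show ?thesis using K0(1) by (intro mult_left_mono) auto
    qed
    also have "\<dots> = K0 ^ n * (\<Prod>ij\<in>upper n. exp (- c * \<bar>y ij\<bar> powr \<alpha>))"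
      by (simp add: exp_sum[OF finite_upper] sum_distrib_left)
    finally show ?thesis unfolding D_def E_def Y_def .
  qed
  show ?thesis using main c0 K0(1) by (intro exI[of _ "K0 ^ n"] exI[of _ c]) auto
qed


lemma mu_density: "mu n = density (MM n) (\<lambda>y. ennreal (indicator (Pset n) y * mdet n (symm_of n y) powr (- (real n + 1) / 2)))"
proof -
  have "(\<lambda>y. indicator (Pset n) y * ennreal (mdet n (symm_of n y) powr (- (real n + 1) / 2)))
      = (\<lambda>y. ennreal (indicator (Pset n) y * mdet n (symm_of n y) powr (- (real n + 1) / 2)))"
    by (rule ext) (simp split: split_indicator)
  then show ?thesis unfolding mu_def by simp
qed

lemma B_integrable:
  assumes c: "0 < c" and al: "0 < \<alpha>"
  shows "integrable (MM n) (\<lambda>y. K * (\<Prod>ij\<in>upper n. exp (- c * \<bar>y ij\<bar> powr \<alpha>)))"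
proof -
  interpret product_sigma_finite "\<lambda>_::nat \<times> nat. lborel"
    by unfold_locales
  have "integrable (MM n) (\<lambda>y. \<Prod>ij\<in>upper n. exp (- c * \<bar>y ij\<bar> powr \<alpha>))"
    by (rule product_integrable_prod[OF finite_upper]) (rule S4[OF c al])
  then show ?thesis by (rule integrable_mult_right)
qed

lemma integrable_generic:
  assumes V: "posdef n V" and W: "posdef n W" and al: "0 < \<alpha>"
    and Xm: "X \<in> borel_measurable (MM n)"
    and Xb: "\<And>y. y \<in> Pset n \<Longrightarrow> norm (X y) \<le> (\<Sum>k<n. sl n (symm_of n y) k powr b1 + sl n (symm_of n y) k powr b2)"
  shows "integrable (mu n) (\<lambda>y. complex_of_real (mdet n (symm_of n y)) powr \<nu> * X y *
         complex_of_real (etr n (\<lambda>i j. - mmul n V (mpow_real n (symm_of n y) \<alpha>) i j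
                                     - mmul n W (mpow_real n (symm_of n y) (- \<alpha>)) i j)))"
    (is "integrable _ ?g")
proof -
  obtain K c where c: "0 < c" and K: "0 \<le> K" and bnd: "\<forall>y\<in>Pset n. \<forall>X::complex.
     norm X \<le> (\<Sum>k<n. sl n (symm_of n y) k powr b1 + sl n (symm_of n y) k powr b2) \<longrightarrow>
     mdet n (symm_of n y) powr (- (real n + 1) / 2) *
       norm (complex_of_real (mdet n (symm_of n y)) powr \<nu> * X *
         complex_of_real (etr n (\<lambda>i j. - mmul n V (mpow_real n (symm_of n y) \<alpha>) i j
                                     - mmul n W (mpow_real n (symm_of n y) (- \<alpha>)) i j)))
     \<le> K * (\<Prod>ij\<in>upper n. exp (- c * \<bar>y ij\<bar> powr \<alpha>))"
    using main_bound[OF V W al, of b1 b2 \<nu>] by blast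
  define dd where "dd = (\<lambda>y. indicator (Pset n) y * mdet n (symm_of n y) powr (- (real n + 1) / 2))"
  note [measurable] = Pind_meas mdet_meas T_meas Xm E_meas
  have ddm: "dd \<in> borel_measurable (MM n)" unfolding dd_def by measurable
  have gm: "?g \<in> borel_measurable (MM n)" by measurable
  have "integrable (MM n) (\<lambda>y. dd y *\<^sub>R ?g y)"
  proof (rule Bochner_Integration.integrable_bound[OF B_integrable[OF c al, of n K]])
    show "(\<lambda>y. dd y *\<^sub>R ?g y) \<in> borel_measurable (MM n)" using ddm gm by measurable
    show "AE y in MM n. norm (dd y *\<^sub>R ?g y) \<le> norm (K * (\<Prod>ij\<in>upper n. exp (- c * \<bar>y ij\<bar> powr \<alpha>)))"
    proof (rule AE_I2)
      fix y
      have B0: "0 \<le> K * (\<Prod>ij\<in>upper n. exp (- c * \<bar>y ij\<bar> powr \<alpha>))"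
        using K by (intro mult_nonneg_nonneg prod_nonneg) auto
      show "norm (dd y *\<^sub>R ?g y) \<le> norm (K * (\<Prod>ij\<in>upper n. exp (- c * \<bar>y ij\<bar> powr \<alpha>)))"
      proof (cases "y \<in> Pset n")
        case True
        have "norm (dd y *\<^sub>R ?g y) = mdet n (symm_of n y) powr (- (real n + 1) / 2) * norm (?g y)"
          unfolding dd_def using True by simp
        also have "\<dots> \<le> K * (\<Prod>ij\<in>upper n. exp (- c * \<bar>y ij\<bar> powr \<alpha>))"
          using bnd True Xb[OF True] by blast
        finally show ?thesis using B0 by simp
      next
        case False
        then show ?thesis unfolding dd_def using B0 by simp
      qed
    qed
  qed
  then show ?thesis unfolding mu_density dd_def[symmetric]
    by (subst integrable_density) (auto simp: ddm gm dd_def)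
qed

lemma T_bound:
  assumes yP: "y \<in> Pset n"
  shows "norm (mtrace n (mpow_cplx n (symm_of n y) p)) \<le>
         (\<Sum>k<n. sl n (symm_of n y) k powr Re p + sl n (symm_of n y) k powr Re p)"
proof -
  have lpos: "\<And>k. k < n \<Longrightarrow> 0 < sl n (symm_of n y) k" using yP unfolding Pset_iff by blast
  have "mtrace n (mpow_cplx n (symm_of n y) p) = (\<Sum>k<n. complex_of_real (sl n (symm_of n y) k) powr p)"
    unfolding mpow_cplx_def by (rule mtrace_mfun[OF symm_symm_of])
  hence "norm (mtrace n (mpow_cplx n (symm_of n y) p)) \<le> (\<Sum>k<n. norm (complex_of_real (sl n (symm_of n y) k) powr p))"
    by (simp add: norm_sum)
  also have "\<dots> = (\<Sum>k<n. sl n (symm_of n y) k powr Re p)"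
    using lpos by (intro sum.cong refl) (subst norm_powr_real_powr, auto simp: less_imp_le)
  also have "\<dots> \<le> (\<Sum>k<n. sl n (symm_of n y) k powr Re p + sl n (symm_of n y) k powr Re p)"
    by (intro sum_mono) simp
  finally show ?thesis .
qed

lemma abs_ln_le: "0 < (t::real) \<Longrightarrow> \<bar>ln t\<bar> \<le> t powr 1 + t powr (-1)"
proof -
  assume t: "0 < t"
  have a: "ln t \<le> t - 1" using ln_le_minus_one[OF t] .
  have b: "- ln t \<le> inverse t - 1" using ln_le_minus_one[of "inverse t"] t by (simp add: ln_inverse)
  have e: "t powr (-1) = inverse t" using t by (simp add: powr_minus)
  have c: "0 < inverse t" using t by simp
  have d1: "ln t \<le> t + inverse t" using a c by linarith
  have d2: "- ln t \<le> t + inverse t" using b t by linarith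
  show ?thesis unfolding e using d1 d2 t by (simp add: abs_le_iff)
qed

lemma ln_bound:
  assumes yP: "y \<in> Pset n"
  shows "norm (complex_of_real (ln (mdet n (symm_of n y)))) \<le>
         (\<Sum>k<n. sl n (symm_of n y) k powr 1 + sl n (symm_of n y) k powr (-1))"
proof -
  have lpos: "\<And>k. k < n \<Longrightarrow> 0 < sl n (symm_of n y) k" using yP unfolding Pset_iff by blast
  have sd: "spec_decomp n (symm_of n y) (sQ n (symm_of n y)) (sl n (symm_of n y))"
    by (rule sQ_spec[OF symm_symm_of])
  have "ln (mdet n (symm_of n y)) = (\<Sum>k<n. ln (sl n (symm_of n y) k))"
    unfolding spec_det[OF sd] using lpos by (subst ln_prod) (auto simp: less_imp_neq[symmetric])
  hence "norm (complex_of_real (ln (mdet n (symm_of n y)))) \<le> (\<Sum>k<n. \<bar>ln (sl n (symm_of n y) k)\<bar>)"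
    unfolding norm_of_real by (simp only: sum_abs)
  also have "\<dots> \<le> (\<Sum>k<n. sl n (symm_of n y) k powr 1 + sl n (symm_of n y) k powr (-1))"
    using lpos by (intro sum_mono abs_ln_le) auto
  finally show ?thesis .
qed

theorem lemmaC4:
  fixes n :: nat and V W :: "nat \<Rightarrow> nat \<Rightarrow> real" and \<nu> p :: complex and \<alpha> :: real
  assumes "posdef n V" and "posdef n W" and "\<alpha> > 0"
  shows "integrable (mu n) (\<lambda>y.
           complex_of_real (mdet n (symm_of n y)) powr \<nu>
           * mtrace n (mpow_cplx n (symm_of n y) p)
           * complex_of_real (etr n (\<lambda>i j. - mmul n V (mpow_real n (symm_of n y) \<alpha>) i j
                                            - mmul n W (mpow_real n (symm_of n y) (- \<alpha>)) i j)))
       \<and> integrable (mu n) (\<lambda>y.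
           complex_of_real (mdet n (symm_of n y)) powr \<nu>
           * complex_of_real (ln (mdet n (symm_of n y)))
           * complex_of_real (etr n (\<lambda>i j. - mmul n V (mpow_real n (symm_of n y) \<alpha>) i j
                                            - mmul n W (mpow_real n (symm_of n y) (- \<alpha>)) i j)))"
proof
  show "integrable (mu n) (\<lambda>y.
           complex_of_real (mdet n (symm_of n y)) powr \<nu>
           * mtrace n (mpow_cplx n (symm_of n y) p)
           * complex_of_real (etr n (\<lambda>i j. - mmul n V (mpow_real n (symm_of n y) \<alpha>) i j
                                            - mmul n W (mpow_real n (symm_of n y) (- \<alpha>)) i j)))"
    by (rule integrable_generic[OF assms T_meas T_bound])
  have lm: "(\<lambda>y. complex_of_real (ln (mdet n (symm_of n y)))) \<in> borel_measurable (MM n)"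
    using mdet_meas by measurable
  show "integrable (mu n) (\<lambda>y.
           complex_of_real (mdet n (symm_of n y)) powr \<nu>
           * complex_of_real (ln (mdet n (symm_of n y)))
           * complex_of_real (etr n (\<lambda>i j. - mmul n V (mpow_real n (symm_of n y) \<alpha>) i j
                                            - mmul n W (mpow_real n (symm_of n y) (- \<alpha>)) i j)))"
    by (rule integrable_generic[OF assms lm ln_bound])
qed

end
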